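(* Let $N$ be a non-negative integer, $\beta=N+1$, $\lambda_1=(h_1+h_2-l_1-l_2-\alpha_1-\alpha_2-\beta+2)/2$, and assume $-\lambda_1-\alpha_1\notin\{0,1,\dots,N-1\}$ and $\lambda_1+\alpha_2>1$ (real). Let $c_k(E)$, $c(E)$ be as in the context and $c(E_0)=0$. Assume the parameters and $x$ are generic so that all expressions below are defined. Define $$g_6(x)=(1-q)x^{-\alpha_1}\frac{(q,\ q^{l_1-l_2+1}t_1/t_2,\ q^{\lambda_1+l_1+\alpha_1+1/2}t_1/x;q)_\infty}{(q^{\lambda_1-h_1+l_1+\alpha_1},\ q^{\lambda_1-h_2+l_1+\alpha_1}t_1/t_2,\ q^{l_1+1/2}t_1/x;q)_\infty}\sum_{k=0}^{N}(q^{l_1+1/2}t_1)^{k+1}c_k(E_0)\,{}_3\phi_2\!\left(\begin{matrix}q^{\lambda_1-h_1+l_1+\alpha_1},\ q^{\lambda_1-h_2+l_1+\alpha_1}t_1/t_2,\ q^{l_1+1/2}t_1/x\\ q^{l_1-l_2+1}t_1/t_2,\ q^{\lambda_1+l_1+\alpha_1+1/2}t_1/x\end{matrix};q,q^{k+1}\right),$$ $$g_7(x)=(1-q)x^{-\alpha_1}\frac{(q,\ q^{-l_1+l_2+1}t_2/t_1,\ q^{\lambda_1+l_2+\alpha_1+1/2}t_2/x;q)_\infty}{(q^{\lambda_1-h_2+l_2+\alpha_1},\ q^{\lambda_1-h_1+l_2+\alpha_1}t_2/t_1,\ q^{l_2+1/2}t_2/x;q)_\infty}\sum_{k=0}^{N}(q^{l_2+1/2}t_2)^{k+1}c_k(E_0)\,{}_3\phi_2\!\left(\begin{matrix}q^{\lambda_1-h_2+l_2+\alpha_1},\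 q^{\lambda_1-h_1+l_2+\alpha_1}t_2/t_1,\ q^{l_2+1/2}t_2/x\\ q^{-l_1+l_2+1}t_2/t_1,\ q^{\lambda_1+l_2+\alpha_1+1/2}t_2/x\end{matrix};q,q^{k+1}\right),$$ $$g_8(x)=(1-q)x^{-\alpha_1}\frac{(q,\ q^{-\lambda_1-l_1-\alpha_1+3/2}x/t_1,\ q^{-\lambda_1-l_2-\alpha_1+3/2}x/t_2;q)_\infty}{(q^{-\lambda_1-\alpha_1+1},\ q^{-h_1+1/2}x/t_1,\ q^{-h_2+1/2}x/t_2;q)_\infty}\sum_{k=0}^{N}(q^{-\lambda_1-\alpha_1+1}x)^{k+1}c_k(E_0)\,{}_3\phi_2\!\left(\begin{matrix}q^{-\lambda_1-\alpha_1+1},\ q^{-h_1+1/2}x/t_1,\ q^{-h_2+1/2}x/t_2\\ q^{-\lambda_1-l_1-\alpha_1+3/2}x/t_1,\ q^{-\lambda_1-l_2-\alpha_1+3/2}x/t_2\end{matrix};q,q^{k+1}\right).$$ Then (iv) for all $i,j\in\{6,7,8\}$ the function $g_i(x)-g_j(x)$ satisfies $A^{\langle4\rangle}(x;h_1,h_2,l_1,l_2,\alpha_1,\alpha_2,\beta)g(x)=E_0g(x)$; and (v) each of $g_6,g_7,g_8$ satisfies $$A^{\langle4\rangle}(x;h_1,h_2,l_1,l_2,\alpha_1,\alpha_2,\beta)g(x)=E_0g(x)-(1-q)x^{-\alpha_1}q^{-\lambda_1+h_1+h_2+1}(q^{-\lambda_1-\alpha_1-N}-1)t_1t_2.$$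
   Context: $q\in\mathbb{C}$ with $0<|q|<1$; powers via a fixed branch of $\log q$ (for real $a$, $|q^a|=|q|^a$); $x^a$ fixed branch with $(qx)^a=q^ax^a$. $(a;q)_\infty=\prod_{k\ge0}(1-aq^k)$, $(a;q)_n=(a;q)_\infty/(aq^n;q)_\infty$, $(a_1,\dots,a_m;q)_n=\prod_i(a_i;q)_n$. ${}_3\phi_2\!\left(\begin{matrix}a_1,a_2,a_3\\ b_1,b_2\end{matrix};q,z\right)=\sum_{n\ge0}\frac{(a_1,a_2,a_3;q)_n}{(q,b_1,b_2;q)_n}z^n$. $t_1,t_2$ fixed non-zero; $T_x^{\pm1}g(x)=g(q^{\pm1}x)$; $A^{\langle 4\rangle}(x;h_1,h_2,l_1,l_2,\alpha_1,\alpha_2,\beta)=x^{-1}(x-q^{h_1+1/2}t_1)(x-q^{h_2+1/2}t_2)T_x^{-1}+q^{\alpha_1+\alpha_2}x^{-1}(x-q^{l_1-1/2}t_1)(x-q^{l_2-1/2}t_2)T_x-\{(q^{\alpha_1}+q^{\alpha_2})x+q^{(h_1+h_2+l_1+l_2+\alpha_1+\alpha_2)/2}(q^{\beta/2}+q^{-\beta/2})t_1t_2x^{-1}\}$. Polynomials: $x_n=t_1t_2q^{n-N+1+h_1+h_2-\alpha_1-2\lambda_1}(1-q^{-n})(1-q^{N-n+\lambda_1+\alpha_1})$, $y_n=q^{N-n+1/2+\lambda_1+\alpha_1+\alpha_2}(q^{l_1}t_1+q^{l_2}t_2)+q^{n-N-1/2-\lambda_1}(q^{h_1}t_1+q^{h_2}t_2)$,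 $z_n=q^{n-N-2+\alpha_1}(1-q^{N-n+1+\lambda_1+\alpha_2})(1-q^{N-n+2})$; $c_{-1}(E)=0$, $c_0(E)=1$, $c_n(E)x_n=c_{n-1}(E)(E+y_n)-c_{n-2}(E)z_n$ for $n=1,\dots,N$, $c(E)=x_1\cdots x_N[c_N(E)(E+y_{N+1})-c_{N-1}(E)z_{N+1}]$. *)

theory Defs
  imports "HOL-Analysis.Analysis"
begin

text \<open>q-powers: \<open>qpow L a = q^a\<close> where \<open>L\<close> is the fixed branch of log q (exp L = q).\<close>
definition qpow :: "complex \<Rightarrow> complex \<Rightarrow> complex" where
  "qpow L a = exp (a * L)"

definition qpinf :: "complex \<Rightarrow> complex \<Rightarrow> complex" where
  "qpinf q a = (\<Prod>k. 1 - a * q ^ k)"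

definition qpn :: "complex \<Rightarrow> complex \<Rightarrow> nat \<Rightarrow> complex" where
  "qpn q a n = (\<Prod>k<n. 1 - a * q ^ k)"

definition phi32 :: "complex \<Rightarrow> complex \<Rightarrow> complex \<Rightarrow> complex \<Rightarrow> complex \<Rightarrow> complex \<Rightarrow> complex \<Rightarrow> complex" where
  "phi32 q a1 a2 a3 b1 b2 z =
     (\<Sum>n. (qpn q a1 n * qpn q a2 n * qpn q a3 n) / (qpn q q n * qpn q b1 n * qpn q b2 n) * z ^ n)"

definition Aop :: "complex \<Rightarrow> complex \<Rightarrow> complex \<Rightarrow> complex \<Rightarrow> complex \<Rightarrow> complex \<Rightarrow> complex \<Rightarrow> complex
    \<Rightarrow> complex \<Rightarrow> complex \<Rightarrow> complex \<Rightarrow> (complex \<Rightarrow> complex) \<Rightarrow> complex \<Rightarrow> complex" where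
  "Aop q L t1 t2 h1 h2 l1 l2 a1 a2 b g x =
     inverse x * (x - qpow L (h1 + 1/2) * t1) * (x - qpow L (h2 + 1/2) * t2) * g (x / q)
   + qpow L (a1 + a2) * inverse x * (x - qpow L (l1 - 1/2) * t1) * (x - qpow L (l2 - 1/2) * t2) * g (q * x)
   - ((qpow L a1 + qpow L a2) * x
      + qpow L ((h1 + h2 + l1 + l2 + a1 + a2) / 2) * (qpow L (b / 2) + qpow L (- b / 2)) * t1 * t2 * inverse x)
     * g x"

definition lam1 :: "complex \<Rightarrow> complex \<Rightarrow> complex \<Rightarrow> complex \<Rightarrow> complex \<Rightarrow> complex \<Rightarrow> complex \<Rightarrow> complex" where
  "lam1 h1 h2 l1 l2 a1 a2 b = (h1 + h2 - l1 - l2 - a1 - a2 - b + 2) / 2"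

definition xc :: "complex \<Rightarrow> complex \<Rightarrow> complex \<Rightarrow> complex \<Rightarrow> complex \<Rightarrow> complex \<Rightarrow> complex \<Rightarrow> nat \<Rightarrow> nat \<Rightarrow> complex" where
  "xc L t1 t2 h1 h2 a1 lam N n =
     t1 * t2 * qpow L (of_nat n - of_nat N + 1 + h1 + h2 - a1 - 2 * lam)
       * (1 - qpow L (- of_nat n)) * (1 - qpow L (of_nat N - of_nat n + lam + a1))"

definition yc :: "complex \<Rightarrow> complex \<Rightarrow> complex \<Rightarrow> complex \<Rightarrow> complex \<Rightarrow> complex \<Rightarrow> complex \<Rightarrow> complex \<Rightarrow> complex \<Rightarrow> complex \<Rightarrow> nat \<Rightarrow> nat \<Rightarrow> complex" where
  "yc L t1 t2 h1 h2 l1 l2 a1 a2 lam N n =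
     qpow L (of_nat N - of_nat n + 1/2 + lam + a1 + a2) * (qpow L l1 * t1 + qpow L l2 * t2)
   + qpow L (of_nat n - of_nat N - 1/2 - lam) * (qpow L h1 * t1 + qpow L h2 * t2)"

definition zc :: "complex \<Rightarrow> complex \<Rightarrow> complex \<Rightarrow> complex \<Rightarrow> nat \<Rightarrow> nat \<Rightarrow> complex" where
  "zc L a1 a2 lam N n =
     qpow L (of_nat n - of_nat N - 2 + a1) * (1 - qpow L (of_nat N - of_nat n + 1 + lam + a2))
       * (1 - qpow L (of_nat N - of_nat n + 2))"

fun cseq :: "(nat \<Rightarrow> complex) \<Rightarrow> (nat \<Rightarrow> complex) \<Rightarrow> (nat \<Rightarrow> complex) \<Rightarrow> complex \<Rightarrow> nat \<Rightarrow> complex" where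
  "cseq X Y Z E 0 = 1"
| "cseq X Y Z E (Suc 0) = (E + Y 1) / X 1"
| "cseq X Y Z E (Suc (Suc n)) =
     (cseq X Y Z E (Suc n) * (E + Y (n + 2)) - cseq X Y Z E n * Z (n + 2)) / X (n + 2)"

definition cfin :: "(nat \<Rightarrow> complex) \<Rightarrow> (nat \<Rightarrow> complex) \<Rightarrow> (nat \<Rightarrow> complex) \<Rightarrow> complex \<Rightarrow> nat \<Rightarrow> complex" where
  "cfin X Y Z E N = (\<Prod>n\<in>{1..N}. X n) *
     (cseq X Y Z E N * (E + Y (N + 1)) - (if N = 0 then 0 else cseq X Y Z E (N - 1)) * Z (N + 1))"

text \<open>Here \<open>xa\<close> is the value x^{-alpha1} and \<open>C k\<close> = c_k(E_0).\<close>
definition gshape :: "complex \<Rightarrow> complex \<Rightarrow> complex \<Rightarrow> complex \<Rightarrow> complex \<Rightarrow> complex \<Rightarrow> complex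
     \<Rightarrow> complex \<Rightarrow> (nat \<Rightarrow> complex) \<Rightarrow> nat \<Rightarrow> complex" where
  "gshape q xa b1 b2 b3 d1 d2 s C N =
     (1 - q) * xa * (qpinf q q * qpinf q d1 * qpinf q d2) / (qpinf q b1 * qpinf q b2 * qpinf q b3)
     * (\<Sum>k\<le>N. s ^ (k + 1) * C k * phi32 q b1 b2 b3 d1 d2 (q ^ (k + 1)))"

definition gpar :: "nat \<Rightarrow> complex \<Rightarrow> complex \<Rightarrow> complex \<Rightarrow> complex \<Rightarrow> complex \<Rightarrow> complex \<Rightarrow> complex
     \<Rightarrow> complex \<Rightarrow> complex \<Rightarrow> complex
     \<Rightarrow> complex \<times> complex \<times> complex \<times> complex \<times> complex \<times> complex" where
  "gpar i L t1 t2 h1 h2 l1 l2 a1 lam x =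
    (if i = 6 then
       (qpow L (lam - h1 + l1 + a1), qpow L (lam - h2 + l1 + a1) * t1 / t2, qpow L (l1 + 1/2) * t1 / x,
        qpow L (l1 - l2 + 1) * t1 / t2, qpow L (lam + l1 + a1 + 1/2) * t1 / x,
        qpow L (l1 + 1/2) * t1)
     else if i = 7 then
       (qpow L (lam - h2 + l2 + a1), qpow L (lam - h1 + l2 + a1) * t2 / t1, qpow L (l2 + 1/2) * t2 / x,
        qpow L (- l1 + l2 + 1) * t2 / t1, qpow L (lam + l2 + a1 + 1/2) * t2 / x,
        qpow L (l2 + 1/2) * t2)
     else
       (qpow L (- lam - a1 + 1), qpow L (- h1 + 1/2) * x / t1, qpow L (- h2 + 1/2) * x / t2,
        qpow L (- lam - l1 - a1 + 3/2) * x / t1, qpow L (- lam - l2 - a1 + 3/2) * x / t2,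
        qpow L (- lam - a1 + 1) * x))"

text \<open>g_i(x) for i = 6,7,8; \<open>lg\<close> is the fixed branch of log used for x^{-alpha1}.\<close>
definition gfun :: "nat \<Rightarrow> complex \<Rightarrow> complex \<Rightarrow> (complex \<Rightarrow> complex) \<Rightarrow> complex \<Rightarrow> complex \<Rightarrow> complex
     \<Rightarrow> complex \<Rightarrow> complex \<Rightarrow> complex \<Rightarrow> complex \<Rightarrow> complex \<Rightarrow> (nat \<Rightarrow> complex) \<Rightarrow> nat \<Rightarrow> complex \<Rightarrow> complex" where
  "gfun i q L lg t1 t2 h1 h2 l1 l2 a1 lam C N x =
     (case gpar i L t1 t2 h1 h2 l1 l2 a1 lam x of (b1, b2, b3, d1, d2, s) \<Rightarrow>
        gshape q (exp (- a1 * lg x)) b1 b2 b3 d1 d2 s C N)"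

text \<open>Non-degeneracy of a q-Pochhammer parameter: a q^n \<noteq> 1 for all n, i.e. (a;q)_inf \<noteq> 0
  and (a;q)_n \<noteq> 0 for all n.\<close>
definition nondeg :: "complex \<Rightarrow> complex \<Rightarrow> bool" where
  "nondeg q a \<longleftrightarrow> (\<forall>n::nat. a * q ^ n \<noteq> 1)"

definition gen_at :: "nat \<Rightarrow> complex \<Rightarrow> complex \<Rightarrow> complex \<Rightarrow> complex \<Rightarrow> complex \<Rightarrow> complex \<Rightarrow> complex
     \<Rightarrow> complex \<Rightarrow> complex \<Rightarrow> complex \<Rightarrow> complex \<Rightarrow> bool" where
  "gen_at i q L t1 t2 h1 h2 l1 l2 a1 lam x \<longleftrightarrow> x \<noteq> 0 \<and>
     (case gpar i L t1 t2 h1 h2 l1 l2 a1 lam x of (b1, b2, b3, d1, d2, s) \<Rightarrow>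
        nondeg q b1 \<and> nondeg q b2 \<and> nondeg q b3 \<and> nondeg q d1 \<and> nondeg q d2)"

end

theory Submission
  imports Defs
begin

lemma qpinf_conv:
  fixes a q :: complex
  assumes "norm q < 1"
  shows "convergent_prod (\<lambda>k. 1 - a * q ^ k)"
proof -
  have "summable (\<lambda>k. norm a * norm q ^ k)"
    using assms by (intro summable_mult summable_geometric) simp
  then have "summable (\<lambda>k. norm ((1 - a * q ^ k) - 1))"
    by (simp add: norm_mult norm_power)
  then show ?thesis
    by (intro abs_convergent_prod_imp_convergent_prod summable_imp_abs_convergent_prod)
qed

lemma qpinf_split:
  fixes a q :: complex
  assumes "norm q < 1"
  shows "qpinf q a = qpn q a n * qpinf q (a * q ^ n)"
proof -
  have "(\<lambda>k. 1 - a * q ^ k) has_prod ((\<Prod>k<n. 1 - a * q ^ k) * (\<Prod>k. 1 - a * q ^ (k + n)))"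
    by (rule has_prod_ignore_initial_segment'[OF qpinf_conv[OF assms]])
  moreover have "(\<lambda>k. 1 - a * q ^ (k + n)) = (\<lambda>k. 1 - (a * q ^ n) * q ^ k)"
    by (simp add: power_add algebra_simps)
  ultimately show ?thesis
    unfolding qpinf_def qpn_def
    using has_prod_unique by metis
qed

lemma qpinf_rec:
  fixes a q :: complex
  assumes "norm q < 1"
  shows "qpinf q a = (1 - a) * qpinf q (a * q)"
  using qpinf_split[OF assms, of a 1] by (simp add: qpn_def)

lemma nondeg_shift:
  assumes "nondeg q a" shows "nondeg q (a * q ^ n)"
  using assms unfolding nondeg_def by (metis mult.assoc power_add)

lemma nondeg_qpinf:
  fixes a q :: complex
  assumes "norm q < 1" "nondeg q a"
  shows "qpinf q a \<noteq> 0"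
  unfolding qpinf_def
  by (rule prodinf_nonzero[OF qpinf_conv[OF assms(1)]]) (use assms(2) in \<open>auto simp: nondeg_def\<close>)

lemma nondeg_qpn:
  assumes "nondeg q a"
  shows "qpn q a n \<noteq> 0"
  using assms unfolding qpn_def nondeg_def by auto

lemma nondeg_one:
  assumes "nondeg q a" shows "1 - a * q ^ n \<noteq> 0"
  using assms unfolding nondeg_def by auto

lemma nondeg_q:
  fixes q :: complex
  assumes "norm q < 1"
  shows "nondeg q q"
proof -
  have "norm (q * q ^ n) < 1" for n
  proof -
    have "norm (q * q ^ n) = norm q * norm q ^ n" by (simp add: norm_mult norm_power)
    also have "\<dots> \<le> norm q" using assms by (simp add: mult_left_le power_le_one)
    finally show ?thesis using assms by simp
  qed
  then show ?thesis unfolding nondeg_def by (metis norm_one less_irrefl)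
qed

lemma qpn_lim:
  fixes a q :: complex
  assumes "norm q < 1"
  shows "(\<lambda>n. qpn q a n) \<longlonglongrightarrow> qpinf q a"
proof -
  have "(\<lambda>n. \<Prod>k\<le>n. 1 - a * q ^ k) \<longlonglongrightarrow> qpinf q a"
    unfolding qpinf_def by (rule convergent_prod_LIMSEQ[OF qpinf_conv[OF assms]])
  then have "(\<lambda>n. qpn q a (Suc n)) \<longlonglongrightarrow> qpinf q a"
    by (simp add: qpn_def lessThan_Suc_atMost)
  then show ?thesis by (rule filterlim_sequentially_Suc[THEN iffD1])
qed

lemma qpinf_tail_lim:
  fixes a q :: complex
  assumes "norm q < 1" "nondeg q a"
  shows "(\<lambda>n. qpinf q (a * q ^ n)) \<longlonglongrightarrow> 1"
proof -
  have "(\<lambda>n. qpinf q a / qpn q a n) \<longlonglongrightarrow> qpinf q a / qpinf q a"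
    by (intro tendsto_divide qpn_lim assms tendsto_const nondeg_qpinf)
  moreover have "qpinf q a / qpn q a n = qpinf q (a * q ^ n)" for n
    using qpinf_split[OF assms(1), of a n] nondeg_qpn[OF assms(2), of n] by simp
  ultimately show ?thesis using nondeg_qpinf[OF assms] by simp
qed

definition pol :: "(nat \<Rightarrow> complex) \<Rightarrow> nat \<Rightarrow> complex \<Rightarrow> complex" where
  "pol C N t = (\<Sum>k\<le>N. C k * t ^ k)"

definition Vg :: "complex \<Rightarrow> complex \<Rightarrow> complex \<Rightarrow> complex \<Rightarrow> complex \<Rightarrow> complex \<Rightarrow> nat \<Rightarrow> complex" where
  "Vg q b1 b2 b3 d1 d2 n = qpinf q (q * q ^ n) * qpinf q (d1 * q ^ n) * qpinf q (d2 * q ^ n)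
     / (qpinf q (b1 * q ^ n) * qpinf q (b2 * q ^ n) * qpinf q (b3 * q ^ n))"

lemma Vg_lim:
  fixes q :: complex
  assumes q: "norm q < 1" and nd: "nondeg q b1" "nondeg q b2" "nondeg q b3" "nondeg q d1" "nondeg q d2"
  shows "(\<lambda>n. Vg q b1 b2 b3 d1 d2 n) \<longlonglongrightarrow> 1"
proof -
  have "(\<lambda>n. Vg q b1 b2 b3 d1 d2 n) \<longlonglongrightarrow> 1 * 1 * 1 / (1 * 1 * 1)"
    unfolding Vg_def
    by (intro tendsto_intros qpinf_tail_lim q nd nondeg_q) simp
  then show ?thesis by simp
qed

lemma summable_bounded_geom:
  fixes f :: "nat \<Rightarrow> complex"
  assumes "Bseq f" "norm z < 1"
  shows "summable (\<lambda>n. f n * z ^ n)"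
proof -
  from assms(1) obtain K where K: "\<forall>n. norm (f n) \<le> K" by (auto elim: BseqE)
  have "summable (\<lambda>n. K * norm z ^ n)" using assms(2) by (intro summable_mult summable_geometric) simp
  moreover have "norm (f n * z ^ n) \<le> K * norm z ^ n" for n
    using K by (simp add: norm_mult norm_power mult_right_mono)
  ultimately show ?thesis by (rule summable_comparison_test'[where N=0])
qed

lemma lemmaG:
  fixes q s xa :: complex and C :: "nat \<Rightarrow> complex" and N :: nat
  assumes q: "norm q < 1" and nd: "nondeg q b1" "nondeg q b2" "nondeg q b3" "nondeg q d1" "nondeg q d2"
  defines "u \<equiv> (\<lambda>n. Vg q b1 b2 b3 d1 d2 n * (s * q ^ n) * pol C N (s * q ^ n))"
  shows "summable u \<and> gshape q xa b1 b2 b3 d1 d2 s C N = (1 - q) * xa * suminf u"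
proof -
  define Pref where "Pref = qpinf q q * qpinf q d1 * qpinf q d2 / (qpinf q b1 * qpinf q b2 * qpinf q b3)"
  define T where "T = (\<lambda>n. (qpn q b1 n * qpn q b2 n * qpn q b3 n) / (qpn q q n * qpn q d1 n * qpn q d2 n))"
  have nq: "nondeg q q" by (rule nondeg_q[OF q])
  have Pnz: "Pref \<noteq> 0" unfolding Pref_def using nondeg_qpinf[OF q] nd nq by simp
  have PT: "T n = Vg q b1 b2 b3 d1 d2 n / Pref" for n
  proof -
    have s: "qpinf q a = qpn q a n * qpinf q (a * q ^ n)" for a by (rule qpinf_split[OF q])
    have nz: "qpn q a n \<noteq> 0" "qpinf q (a * q ^ n) \<noteq> 0" if "nondeg q a" for a
      using that nondeg_qpn nondeg_qpinf[OF q] nondeg_shift by auto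
    show ?thesis
      unfolding T_def Vg_def Pref_def
      apply (subst s[of q], subst s[of d1], subst s[of d2], subst s[of b1], subst s[of b2], subst s[of b3])
      using nz[OF nq] nz[OF nd(1)] nz[OF nd(2)] nz[OF nd(3)] nz[OF nd(4)] nz[OF nd(5)]
      by (simp add: field_simps mult.commute[of _ q])
  qed
  have B: "Bseq (Vg q b1 b2 b3 d1 d2)"
    by (rule convergent_imp_Bseq, rule convergentI, rule Vg_lim[OF q nd])
  have qk: "norm (q ^ (k + 1)) < 1" for k
  proof -
    have "norm (q ^ (k + 1)) = norm q * norm q ^ k" by (simp add: norm_mult norm_power)
    also have "\<dots> \<le> norm q" using q by (simp add: mult_left_le power_le_one)
    finally show ?thesis using q by simp
  qed
  have sm: "summable (\<lambda>n. Vg q b1 b2 b3 d1 d2 n * (q ^ (k + 1)) ^ n)" for k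
    by (rule summable_bounded_geom[OF B qk])
  have phi: "phi32 q b1 b2 b3 d1 d2 (q ^ (k + 1)) = (\<Sum>n. Vg q b1 b2 b3 d1 d2 n * (q ^ (k + 1)) ^ n) / Pref" for k
  proof -
    have "phi32 q b1 b2 b3 d1 d2 (q ^ (k + 1)) = (\<Sum>n. Vg q b1 b2 b3 d1 d2 n * (q ^ (k + 1)) ^ n / Pref)"
      unfolding phi32_def using PT by (simp add: T_def)
    also have "\<dots> = (\<Sum>n. Vg q b1 b2 b3 d1 d2 n * (q ^ (k + 1)) ^ n) / Pref"
      by (rule suminf_divide[OF sm])
    finally show ?thesis .
  qed
  define w where "w = (\<lambda>k n. C k * s ^ (k + 1) * (Vg q b1 b2 b3 d1 d2 n * (q ^ (k + 1)) ^ n))"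
  have smw: "summable (w k)" for k unfolding w_def by (rule summable_mult[OF sm])
  have uw: "u n = (\<Sum>k\<in>{..N}. w k n)" for n
    unfolding u_def w_def pol_def
    by (simp add: sum_distrib_left sum_distrib_right power_mult_distrib power_mult[symmetric] algebra_simps)
  have "gshape q xa b1 b2 b3 d1 d2 s C N = (1 - q) * xa * Pref * (\<Sum>k\<le>N. s ^ (k + 1) * C k * phi32 q b1 b2 b3 d1 d2 (q ^ (k + 1)))"
    unfolding gshape_def Pref_def by simp
  also have "(\<Sum>k\<le>N. s ^ (k + 1) * C k * phi32 q b1 b2 b3 d1 d2 (q ^ (k + 1))) = (\<Sum>k\<le>N. suminf (w k)) / Pref"
  proof -
    have "suminf (w k) = C k * s ^ (k + 1) * (\<Sum>n. Vg q b1 b2 b3 d1 d2 n * (q ^ (k + 1)) ^ n)" for k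
      unfolding w_def by (rule suminf_mult[OF sm])
    then show ?thesis unfolding phi sum_divide_distrib by (intro sum.cong) auto
  qed
  also have "(\<Sum>k\<le>N. suminf (w k)) = suminf u"
    unfolding uw by (rule suminf_sum[symmetric], rule smw)
  finally have "gshape q xa b1 b2 b3 d1 d2 s C N = (1 - q) * xa * suminf u" using Pnz by simp
  moreover have "summable u" unfolding uw by (rule summable_sum, rule smw)
  ultimately show ?thesis by simp
qed

lemma rec_all:
  fixes Xs Ys Zs :: "nat \<Rightarrow> complex" and E :: complex and N :: nat
  defines "c \<equiv> (\<lambda>n. if n \<le> N then cseq Xs Ys Zs E n else 0)"
  defines "cm1 \<equiv> (\<lambda>n. if n = 0 then 0 else c (n - 1))"
  defines "cm2 \<equiv> (\<lambda>n. if n < 2 then 0 else c (n - 2))"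
  assumes X0: "Xs 0 = 0" and XN: "\<forall>n\<in>{1..N}. Xs n \<noteq> 0" and Z2: "Zs (N + 2) = 0"
    and cf: "cfin Xs Ys Zs E N = 0"
  shows "Xs n * c n - (E + Ys n) * cm1 n + Zs n * cm2 n = 0"
proof -
  consider "n = 0" | "n = 1" "1 \<le> N" | m where "n = m + 2" "m + 2 \<le> N" | "n = N + 1" | "n = N + 2" | "n > N + 2"
    by (cases n; cases "n - 1"; auto; linarith)
  then show ?thesis
  proof cases
    case 1 then show ?thesis by (simp add: X0 cm1_def cm2_def)
  next
    case 2 then show ?thesis using XN by (simp add: c_def cm1_def cm2_def field_simps)
  next
    case 3
    then have "Xs (m + 2) \<noteq> 0" using XN by auto
    with 3 show ?thesis
      by (simp add: c_def cm1_def cm2_def numeral_2_eq_2 field_simps)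
  next
    case 4
    have "(\<Prod>n\<in>{1..N}. Xs n) \<noteq> 0" using XN by simp
    with cf have "cseq Xs Ys Zs E N * (E + Ys (N + 1)) - (if N = 0 then 0 else cseq Xs Ys Zs E (N - 1)) * Zs (N + 1) = 0"
      unfolding cfin_def by simp
    with 4 show ?thesis by (cases N) (auto simp: c_def cm1_def cm2_def algebra_simps)
  next
    case 5 then show ?thesis using Z2 by (simp add: c_def cm1_def cm2_def numeral_2_eq_2)
  next
    case 6 then have "\<not> n - 2 \<le> N" "\<not> n - 1 \<le> N" "\<not> n \<le> N" by auto
    then show ?thesis by (simp add: c_def cm1_def cm2_def)
  qed
qed

lemma sum_trunc:
  fixes f :: "nat \<Rightarrow> complex"
  assumes "\<And>n. n > N \<Longrightarrow> f n = 0" "N \<le> K"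
  shows "(\<Sum>n\<le>K. f n) = (\<Sum>n\<le>N. f n)"
  by (rule sum.mono_neutral_right) (use assms in auto)

lemma Deq:
  fixes Xs Ys Zs :: "nat \<Rightarrow> complex" and E q t Cx Q Y1 Y2 Cz A B :: complex and N :: nat
  assumes q0: "q \<noteq> 0"
    and Xf: "\<And>n. Xs n = Cx * (q ^ n - 1) * (1 - Q / q ^ n)"
    and Yf: "\<And>n. Ys n = Y1 / q ^ n + Y2 * q ^ n"
    and Zf: "\<And>n. Zs n = Cz * (q ^ n - (A + B) + A * B / q ^ n)"
    and XN: "\<forall>n\<in>{1..N}. Xs n \<noteq> 0" and Z2: "Zs (N + 2) = 0"
    and cf: "cfin Xs Ys Zs E N = 0"
  defines "P \<equiv> pol (cseq Xs Ys Zs E) N"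
  shows "Cx * (P (q * t) - (1 + Q) * P t + Q * P (t / q)) - E * t * P t
     - t * (Y1 / q * P (t / q) + Y2 * q * P (q * t))
     + t ^ 2 * Cz * (q ^ 2 * P (q * t) - (A + B) * P t + A * B / q ^ 2 * P (t / q)) = 0"
proof -
  define cs where "cs = cseq Xs Ys Zs E"
  define c where "c = (\<lambda>n. if n \<le> N then cs n else 0)"
  define cm1 where "cm1 = (\<lambda>n::nat. if n = 0 then 0 else c (n - 1))"
  define cm2 where "cm2 = (\<lambda>n::nat. if n < 2 then 0 else c (n - 2))"
  have X0: "Xs 0 = 0" using Xf[of 0] by simp
  have R: "Xs n * c n - (E + Ys n) * cm1 n + Zs n * cm2 n = 0" for n
    unfolding c_def cm1_def cm2_def cs_def by (rule rec_all[OF X0 XN Z2 cf])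
  define F where "F = (\<lambda>m. t ^ m * Xs m * cs m - t ^ (m + 1) * (E + Ys (m + 1)) * cs m
        + t ^ (m + 2) * Zs (m + 2) * cs m)"
  have S1: "(\<Sum>n\<le>N + 2. t ^ n * Xs n * c n) = (\<Sum>m\<le>N. t ^ m * Xs m * cs m)"
    by (subst sum_trunc[of N]) (auto simp: c_def)
  have S2: "(\<Sum>n\<le>N + 2. t ^ n * (E + Ys n) * cm1 n) = (\<Sum>m\<le>N. t ^ (m + 1) * (E + Ys (m + 1)) * cs m)"
  proof -
    have "(\<Sum>n\<le>Suc (N + 1). t ^ n * (E + Ys n) * cm1 n) = (\<Sum>m\<le>N + 1. t ^ Suc m * (E + Ys (Suc m)) * c m)"
      by (subst sum.atMost_Suc_shift) (simp add: cm1_def)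
    also have "\<dots> = (\<Sum>m\<le>N. t ^ (m + 1) * (E + Ys (m + 1)) * cs m)"
      by (subst sum_trunc[of N]) (auto simp: c_def)
    finally show ?thesis by simp
  qed
  have S3: "(\<Sum>n\<le>N + 2. t ^ n * Zs n * cm2 n) = (\<Sum>m\<le>N. t ^ (m + 2) * Zs (m + 2) * cs m)"
  proof -
    have "(\<Sum>n\<le>Suc (Suc N). t ^ n * Zs n * cm2 n) = (\<Sum>m\<le>N. t ^ Suc (Suc m) * Zs (Suc (Suc m)) * c m)"
      by (simp only: sum.atMost_Suc_shift) (simp add: cm2_def)
    also have "\<dots> = (\<Sum>m\<le>N. t ^ (m + 2) * Zs (m + 2) * cs m)"
      by (intro sum.cong) (auto simp: c_def numeral_2_eq_2)
    finally show ?thesis by (simp add: numeral_2_eq_2)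
  qed
  have "(\<Sum>m\<le>N. F m) = (\<Sum>n\<le>N + 2. t ^ n * (Xs n * c n - (E + Ys n) * cm1 n + Zs n * cm2 n))"
    unfolding F_def sum.distrib sum_subtractf S1[symmetric] S2[symmetric] S3[symmetric]
    by (simp add: algebra_simps sum.distrib sum_subtractf)
  also have "\<dots> = 0" using R by simp
  finally have F0: "(\<Sum>m\<le>N. F m) = 0" .
  have qn: "q ^ n \<noteq> 0" for n using q0 by simp
  have Fm: "F m = cs m * (Cx * ((q * t) ^ m - (1 + Q) * t ^ m + Q * (t / q) ^ m) - E * t * t ^ m
     - t * (Y1 / q * (t / q) ^ m + Y2 * q * (q * t) ^ m)
     + t ^ 2 * Cz * (q ^ 2 * (q * t) ^ m - (A + B) * t ^ m + A * B / q ^ 2 * (t / q) ^ m))" for m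
  proof -
    have e: "(q * t) ^ m = q ^ m * t ^ m" "(t / q) ^ m = t ^ m / q ^ m" "t ^ (m + 1) = t ^ m * t"
      "t ^ (m + 2) = t ^ m * t\<^sup>2" "q ^ (m + 1) = q ^ m * q" "q ^ (m + 2) = q ^ m * q\<^sup>2"
      by (simp_all add: power_mult_distrib power_divide power_add power2_eq_square)
    show ?thesis unfolding F_def Xf Yf Zf e using qn[of m] q0
      by (simp add: divide_simps power2_eq_square) (simp add: algebra_simps)
  qed
  have "Cx * (P (q * t) - (1 + Q) * P t + Q * P (t / q)) - E * t * P t
     - t * (Y1 / q * P (t / q) + Y2 * q * P (q * t))
     + t ^ 2 * Cz * (q ^ 2 * P (q * t) - (A + B) * P t + A * B / q ^ 2 * P (t / q)) = (\<Sum>m\<le>N. F m)"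
    unfolding Fm P_def pol_def cs_def
    by (simp add: sum_distrib_left sum_distrib_right sum.distrib sum_subtractf algebra_simps)
  with F0 show ?thesis by simp
qed

definition Dexp where
  "Dexp q qN a qa1 qa2 H1 H2 L1 L2 E t pm p0 pp =
    (let Cx = q * qa2 * L1 * L2; Q = qN * a; Y1 = q * qN * a * qa2 * (L1 + L2);
         Y2 = qa1 * (H1 + H2) / (a * q * qN); Cz = qa1 / (qN * q^2);
         A = q * qN * a * qa2 / qa1; B = qN * q^2 in
     Cx * (pp - (1 + Q) * p0 + Q * pm) - E * t * p0
     - t * (Y1 / q * pm + Y2 * q * pp)
     + t ^ 2 * Cz * (q ^ 2 * pp - (A + B) * p0 + A * B / q ^ 2 * pm))"


lemma lin_asm:
  fixes V0 Vm Vp V1 t pz pm pp cm cp c0 E rm rp W Z A0 B0 al be K0 Km Kp :: complex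
  assumes "Vm = V0 * rm" "Vp = V0 * rp" "V1 * W = V0 * B0 * rm" "rm * Z = 1"
    and "t * (cm * rm + cp * rp - c0) - A0 * al * rp + B0 * be * rm = K0"
  shows "cm * Vm * t * pz + cp * Vp * t * pz - (c0 + E) * V0 * t * pz
     = V0 * (A0 * (al * rp * pz + be * pm)) - V1 * (W * (al * Z * pp + be * pz))
       + V0 * (K0 * pz - E * t * pz - A0 * be * pm + B0 * al * pp)"
proof -
  have "V1 * (W * (al * Z * pp + be * pz)) = (V1 * W) * (al * Z * pp + be * pz)" by (simp add: algebra_simps)
  also have "\<dots> = V0 * B0 * (al * (rm * Z) * pp + be * rm * pz)" using assms(3) by (simp add: algebra_simps)
  finally have e: "V1 * (W * (al * Z * pp + be * pz)) = V0 * B0 * (al * pp + be * rm * pz)" using assms(4) by simp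
  show ?thesis unfolding e assms(1,2) assms(5)[symmetric] by (simp add: algebra_simps)
qed


lemma regroup:
  fixes t c1 r1 c2 r2 c0 A al B be :: complex
  shows "t * (c1 * r1 + c2 * r2 - c0) - A * al * r2 + B * be * r1
    = (t * c1 + B * be) * r1 + (t * c2 - A * al) * r2 - t * c0"
  by (simp add: algebra_simps)


lemma lin2:
  fixes K p0 e X pm Y pp :: complex
  shows "K * p0 - e + (- X) * pm + Y * pp = K * p0 - e - X * pm + Y * pp"
  by simp

lemma coreI:
  fixes q qN a qa1 qa2 H1 H2 L1 L2 E t x pm p0 pp V0 Vm Vp V1 :: complex
  assumes nz: "q \<noteq> 0" "qN \<noteq> 0" "a \<noteq> 0" "qa1 \<noteq> 0" "H1 \<noteq> 0" "H2 \<noteq> 0" "L1 \<noteq> 0" "L2 \<noteq> 0" "x \<noteq> 0"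
    and nz2: "1 - t / L1 \<noteq> 0" "1 - t / L2 \<noteq> 0" "1 - a * t / x \<noteq> 0" "1 - t / (q * x) \<noteq> 0" "1 - t / x \<noteq> 0"
    and rel: "qa2 = H1 * H2 * qa1 / (q * qN * a^2 * L1 * L2)"
    and hm: "Vm * (1 - a * t / x) = V0 * (1 - t / x)"
    and hp: "Vp * (1 - t / (q * x)) = V0 * (1 - a * t / (q * x))"
    and h1: "V1 * ((1 - t / L1) * (1 - t / L2) * (1 - a * t / x)) = V0 * ((1 - a * t / H1) * (1 - a * t / H2) * (1 - t / x))"
    and D: "Dexp q qN a qa1 qa2 H1 H2 L1 L2 E t pm p0 pp = 0"
  shows "(x - H1) * (x - H2) / x * qa1 * Vm * t * p0 + (x - L1) * (x - L2) / x * qa2 * Vp * t * p0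
      - ((qa1 + qa2) * x + qa1 / a * H1 * H2 * (1 + 1 / (q * qN)) / x + E) * V0 * t * p0
    = V0 * ((1 - t / (q * L1)) * (1 - t / (q * L2)) * ((q * qa2 * L1 * L2) * ((1 - a * t / (q * x)) / (1 - t / (q * x))) * p0 + (- (qa1 / a * H1 * H2)) * pm))
    - V1 * ((1 - t / L1) * (1 - t / L2) * ((q * qa2 * L1 * L2) * ((1 - a * t / x) / (1 - t / x)) * pp + (- (qa1 / a * H1 * H2)) * p0))"
proof -
  have nz3: "L1 - t \<noteq> 0" "L2 - t \<noteq> 0" "x - a * t \<noteq> 0" "q * x - t \<noteq> 0" "x - t \<noteq> 0"
    using nz nz2 by (auto simp: field_simps)
  define Cx where "Cx = q * qa2 * L1 * L2"
  define Q where "Q = qN * a"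
  define Y1 where "Y1 = q * qN * a * qa2 * (L1 + L2)"
  define Y2 where "Y2 = qa1 * (H1 + H2) / (a * q * qN)"
  define Cz where "Cz = qa1 / (qN * q^2)"
  define A where "A = q * qN * a * qa2 / qa1"
  define B where "B = qN * q^2"
  define al where "al = q * qa2 * L1 * L2"
  define be where "be = - (qa1 / a * H1 * H2)"
  have Km: "(1 - t / (q * L1)) * (1 - t / (q * L2)) * be + (Cx * Q - t * Y1 / q + t^2 * Cz * A * B / q^2) = 0"
    unfolding be_def Cx_def Q_def Y1_def Cz_def A_def B_def rel using nz
    by (simp add: field_simps power2_eq_square)
  have Kp: "(1 - a * t / H1) * (1 - a * t / H2) * al = Cx - t * Y2 * q + t^2 * Cz * q^2"
    unfolding al_def Cx_def Y2_def Cz_def rel using nz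
    by (simp add: field_simps power2_eq_square)
  have F1: "t * ((x - H1) * (x - H2) / x * qa1) + (1 - a * t / H1) * (1 - a * t / H2) * be
      = qa1 * (x - a * t) * (x * t - H1 * H2 / a) / x"
    unfolding be_def using nz by (simp add: field_simps; simp add: algebra_simps)
  have F2: "t * ((x - L1) * (x - L2) / x * qa2) - (1 - t / (q * L1)) * (1 - t / (q * L2)) * al
      = qa2 * (1 - t / (q * x)) * (x * t - q * L1 * L2)"
    unfolding al_def using nz by (simp add: field_simps; simp add: algebra_simps)
  have F1': "(qa1 * (x - a * t) * (x * t - H1 * H2 / a) / x) * ((1 - t / x) / (1 - a * t / x))
     = qa1 * (x * t - H1 * H2 / a) * (x - t) / x"
    using nz nz3 by (simp add: field_simps)
  have F2': "(qa2 * (1 - t / (q * x)) * (x * t - q * L1 * L2)) * ((1 - a * t / (q * x)) / (1 - t / (q * x)))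
     = qa2 * (x * t - q * L1 * L2) * (1 - a * t / (q * x))"
    using nz nz3 by (simp add: field_simps)
  have P: "qa1 * (x * t - H1 * H2 / a) * (x - t) / x + qa2 * (x * t - q * L1 * L2) * (1 - a * t / (q * x))
      - t * ((qa1 + qa2) * x + qa1 / a * H1 * H2 * (1 + 1 / (q * qN)) / x)
      = - Cx * (1 + Q) - t^2 * Cz * (A + B)"
    unfolding Cx_def Q_def Cz_def A_def B_def rel using nz
    by (simp add: field_simps power2_eq_square; simp add: algebra_simps)
  have K0: "t * ((x - H1) * (x - H2) / x * qa1 * ((1 - t / x) / (1 - a * t / x))
        + (x - L1) * (x - L2) / x * qa2 * ((1 - a * t / (q * x)) / (1 - t / (q * x)))
        - ((qa1 + qa2) * x + qa1 / a * H1 * H2 * (1 + 1 / (q * qN)) / x))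
      - (1 - t / (q * L1)) * (1 - t / (q * L2)) * al * ((1 - a * t / (q * x)) / (1 - t / (q * x)))
      + (1 - a * t / H1) * (1 - a * t / H2) * be * ((1 - t / x) / (1 - a * t / x))
      = - Cx * (1 + Q) - t^2 * Cz * (A + B)"
  proof -
    have "t * ((x - H1) * (x - H2) / x * qa1 * ((1 - t / x) / (1 - a * t / x))
        + (x - L1) * (x - L2) / x * qa2 * ((1 - a * t / (q * x)) / (1 - t / (q * x)))
        - ((qa1 + qa2) * x + qa1 / a * H1 * H2 * (1 + 1 / (q * qN)) / x))
      - (1 - t / (q * L1)) * (1 - t / (q * L2)) * al * ((1 - a * t / (q * x)) / (1 - t / (q * x)))
      + (1 - a * t / H1) * (1 - a * t / H2) * be * ((1 - t / x) / (1 - a * t / x))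
      = (t * ((x - H1) * (x - H2) / x * qa1) + (1 - a * t / H1) * (1 - a * t / H2) * be) * ((1 - t / x) / (1 - a * t / x))
        + (t * ((x - L1) * (x - L2) / x * qa2) - (1 - t / (q * L1)) * (1 - t / (q * L2)) * al) * ((1 - a * t / (q * x)) / (1 - t / (q * x)))
        - t * ((qa1 + qa2) * x + qa1 / a * H1 * H2 * (1 + 1 / (q * qN)) / x)"
      by (rule regroup)
    also have "\<dots> = - Cx * (1 + Q) - t^2 * Cz * (A + B)"
      unfolding F1 F2 F1' F2' P[symmetric] ..
    finally show ?thesis .
  qed
  have rm: "Vm = V0 * ((1 - t / x) / (1 - a * t / x))" using hm nz2 by (simp add: eq_divide_eq)
  have rp: "Vp = V0 * ((1 - a * t / (q * x)) / (1 - t / (q * x)))" using hp nz2 by (simp add: eq_divide_eq)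
  have v1: "V1 * ((1 - t / L1) * (1 - t / L2)) = V0 * ((1 - a * t / H1) * (1 - a * t / H2)) * ((1 - t / x) / (1 - a * t / x))"
    using h1 nz2 by (simp add: field_simps)
  have rz: "((1 - t / x) / (1 - a * t / x)) * ((1 - a * t / x) / (1 - t / x)) = 1" using nz2 by simp
  note L = lin_asm[OF rm rp v1 rz K0, where pz=p0 and pm=pm and pp=pp and E=E]
  have Dx: "Dexp q qN a qa1 qa2 H1 H2 L1 L2 E t pm p0 pp =
     (- Cx * (1 + Q) - t^2 * Cz * (A + B)) * p0 - E * t * p0 - (1 - t / (q * L1)) * (1 - t / (q * L2)) * be * pm
       + (1 - a * t / H1) * (1 - a * t / H2) * al * pp"
  proof -
    have "Dexp q qN a qa1 qa2 H1 H2 L1 L2 E t pm p0 pp = Cx * (pp - (1 + Q) * p0 + Q * pm) - E * t * p0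
     - t * (Y1 / q * pm + Y2 * q * pp)
     + t ^ 2 * Cz * (q ^ 2 * pp - (A + B) * p0 + A * B / q ^ 2 * pm)"
      unfolding Dexp_def Let_def Cx_def Q_def Y1_def Y2_def Cz_def A_def B_def ..
    also have "\<dots> = (- Cx * (1 + Q) - t^2 * Cz * (A + B)) * p0 - E * t * p0
      + (Cx * Q - t * Y1 / q + t^2 * Cz * A * B / q^2) * pm + (Cx - t * Y2 * q + t^2 * Cz * q^2) * pp"
      by (simp add: algebra_simps)
    also have "\<dots> = (- Cx * (1 + Q) - t^2 * Cz * (A + B)) * p0 - E * t * p0 - (1 - t / (q * L1)) * (1 - t / (q * L2)) * be * pm
       + (1 - a * t / H1) * (1 - a * t / H2) * al * pp"
    proof -
      have Km': "Cx * Q - t * Y1 / q + t^2 * Cz * A * B / q^2 = - ((1 - t / (q * L1)) * (1 - t / (q * L2)) * be)"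
        using Km by (simp only: add_eq_0_iff)
      show ?thesis unfolding Km' Kp[symmetric] by (rule lin2)
    qed
    finally show ?thesis .
  qed
  have "(x - H1) * (x - H2) / x * qa1 * Vm * t * p0 + (x - L1) * (x - L2) / x * qa2 * Vp * t * p0
      - ((qa1 + qa2) * x + qa1 / a * H1 * H2 * (1 + 1 / (q * qN)) / x + E) * V0 * t * p0
    = V0 * ((1 - t / (q * L1)) * (1 - t / (q * L2)) * (al * ((1 - a * t / (q * x)) / (1 - t / (q * x))) * p0 + be * pm))
    - V1 * ((1 - t / L1) * (1 - t / L2) * (al * ((1 - a * t / x) / (1 - t / x)) * pp + be * p0))
    + V0 * Dexp q qN a qa1 qa2 H1 H2 L1 L2 E t pm p0 pp"
    by (subst Dx) (rule L)
  then show ?thesis using D unfolding al_def be_def by simp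
qed

definition G8f :: "complex \<Rightarrow> complex \<Rightarrow> complex \<Rightarrow> complex \<Rightarrow> complex \<Rightarrow> complex \<Rightarrow> complex \<Rightarrow> complex
    \<Rightarrow> complex \<Rightarrow> complex \<Rightarrow> complex \<Rightarrow> complex \<Rightarrow> complex \<Rightarrow> complex" where
  "G8f q a qa1 qa2 H1 H2 L1 L2 x V t pm pz =
     V * ((1 - a * t / (q * x)) * (qa2 * (q * L1 * L2 - x * t) * pz
       + qa1 * (x * t / q - H1 * H2 / a) * (((1 - t / (q * L1)) * (1 - t / (q * L2))) / ((1 - a * t / (q * H1)) * (1 - a * t / (q * H2)))) * pm))"

lemma lin_asm2:
  fixes V0 Vm Vp V1 t pm pz pp cm cp c0 E r1 r2 r1q U0 U1 Ua X0 Y0 X1 Y1 KM KP K0 q :: complex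
  assumes "Vm = V0 * r1" "Vp = V0 * r2" "V1 * U1 = V0 * r2 * U0" "r1q * r2 = 1"
    and "r1 * (cm * (t / q) - Ua * Y0) = KM" "r2 * (cp * (q * t) + U0 * X1) = KP"
    and "- c0 * t - Ua * X0 + U0 * Y1 = K0"
  shows "cm * Vm * (t / q) * pm + cp * Vp * (q * t) * pp - (c0 + E) * V0 * t * pz
    = V0 * (Ua * (X0 * pz + Y0 * r1 * pm)) - V1 * (U1 * (X1 * pp + Y1 * r1q * pz))
      + V0 * (K0 * pz - E * t * pz + KM * pm + KP * pp)"
proof -
  have "V1 * (U1 * (X1 * pp + Y1 * r1q * pz)) = (V1 * U1) * (X1 * pp + Y1 * r1q * pz)" by (simp add: algebra_simps)
  also have "\<dots> = V0 * (r2 * U0 * X1 * pp + U0 * Y1 * (r1q * r2) * pz)" unfolding assms(3) by (simp add: algebra_simps)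
  finally have e: "V1 * (U1 * (X1 * pp + Y1 * r1q * pz)) = V0 * (r2 * U0 * X1 * pp + U0 * Y1 * pz)" using assms(4) by simp
  show ?thesis unfolding e assms(1,2) assms(5,6,7)[symmetric] by (simp add: algebra_simps)
qed

lemma divW:
  fixes V1 W U1 V0 B U0 :: complex
  assumes "W \<noteq> 0" "V1 * (W * U1) = V0 * (B * U0)"
  shows "V1 * U1 = V0 * (B / W) * U0"
proof -
  have "V1 * U1 = V1 * (W * U1) / W" using assms(1) by simp
  also have "\<dots> = V0 * (B / W) * U0" unfolding assms(2) by simp
  finally show ?thesis .
qed

lemma e5g:
  fixes A0 Bm c :: complex
  assumes "Bm \<noteq> 0" shows "(A0 / Bm) * (c * Bm) = - (A0 * (- c))"
  using assms by simp

lemma e6g: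
  fixes B0 W al :: complex
  assumes "W \<noteq> 0" shows "(B0 / W) * (W * al) = B0 * al"
  using assms by simp

lemma coreII:
  fixes q qN a qa1 qa2 H1 H2 L1 L2 E t x pm p0 pp V0 Vm Vp V1 :: complex
  assumes nz: "q \<noteq> 0" "qN \<noteq> 0" "a \<noteq> 0" "qa1 \<noteq> 0" "H1 \<noteq> 0" "H2 \<noteq> 0" "L1 \<noteq> 0" "L2 \<noteq> 0" "x \<noteq> 0"
    and nz2: "1 - t / L1 \<noteq> 0" "1 - t / L2 \<noteq> 0" "1 - a * t / x \<noteq> 0" "1 - a * t / H1 \<noteq> 0" "1 - a * t / H2 \<noteq> 0"
      "1 - a * t / (q * H1) \<noteq> 0" "1 - a * t / (q * H2) \<noteq> 0"
    and rel: "qa2 = H1 * H2 * qa1 / (q * qN * a^2 * L1 * L2)"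
    and hm: "Vm * ((1 - a * t / (q * H1)) * (1 - a * t / (q * H2))) = V0 * ((1 - t / (q * L1)) * (1 - t / (q * L2)))"
    and hp: "Vp * ((1 - t / L1) * (1 - t / L2)) = V0 * ((1 - a * t / H1) * (1 - a * t / H2))"
    and h1: "V1 * ((1 - t / L1) * (1 - t / L2) * (1 - a * t / x)) = V0 * ((1 - a * t / H1) * (1 - a * t / H2) * (1 - t / x))"
    and D: "Dexp q qN a qa1 qa2 H1 H2 L1 L2 E t pm p0 pp = 0"
  shows "(x - H1) * (x - H2) / x * qa1 * Vm * (t / q) * pm + (x - L1) * (x - L2) / x * qa2 * Vp * (q * t) * pp
      - ((qa1 + qa2) * x + qa1 / a * H1 * H2 * (1 + 1 / (q * qN)) / x + E) * V0 * t * p0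
    = G8f q a qa1 qa2 H1 H2 L1 L2 x V0 t pm p0 - G8f q a qa1 qa2 H1 H2 L1 L2 x V1 (q * t) p0 pp"
proof -
  define Cx where "Cx = q * qa2 * L1 * L2"
  define Q where "Q = qN * a"
  define Y1 where "Y1 = q * qN * a * qa2 * (L1 + L2)"
  define Y2 where "Y2 = qa1 * (H1 + H2) / (a * q * qN)"
  define Cz where "Cz = qa1 / (qN * q^2)"
  define A where "A = q * qN * a * qa2 / qa1"
  define B where "B = qN * q^2"
  define al where "al = q * qa2 * L1 * L2"
  define be where "be = - (qa1 / a * H1 * H2)"
  have Km: "(1 - t / (q * L1)) * (1 - t / (q * L2)) * be + (Cx * Q - t * Y1 / q + t^2 * Cz * A * B / q^2) = 0"
    unfolding be_def Cx_def Q_def Y1_def Cz_def A_def B_def rel using nz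
    by (simp add: field_simps power2_eq_square)
  have Kp: "(1 - a * t / H1) * (1 - a * t / H2) * al = Cx - t * Y2 * q + t^2 * Cz * q^2"
    unfolding al_def Cx_def Y2_def Cz_def rel using nz
    by (simp add: field_simps power2_eq_square)
  have Km': "Cx * Q - t * Y1 / q + t^2 * Cz * A * B / q^2 = - ((1 - t / (q * L1)) * (1 - t / (q * L2)) * be)"
    using Km by (simp only: add_eq_0_iff)
  have M1: "(x - H1) * (x - H2) / x * qa1 * (t / q) - (1 - a * t / (q * x)) * (qa1 * (x * t / q - H1 * H2 / a))
      = qa1 / a * H1 * H2 * ((1 - a * t / (q * H1)) * (1 - a * t / (q * H2)))"
    using nz by (simp add: field_simps; simp add: algebra_simps)
  have M2: "(x - L1) * (x - L2) / x * qa2 * (q * t) + (1 - t / x) * (qa2 * (q * L1 * L2 - x * (q * t)))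
      = ((1 - t / L1) * (1 - t / L2)) * al"
    unfolding al_def using nz by (simp add: field_simps; simp add: algebra_simps)
  have M0: "- ((qa1 + qa2) * x + qa1 / a * H1 * H2 * (1 + 1 / (q * qN)) / x) * t
      - (1 - a * t / (q * x)) * (qa2 * (q * L1 * L2 - x * t)) + (1 - t / x) * (qa1 * (x * t - H1 * H2 / a))
      = - Cx * (1 + Q) - t^2 * Cz * (A + B)"
    unfolding Cx_def Q_def Cz_def A_def B_def rel using nz
    by (simp add: field_simps power2_eq_square; simp add: algebra_simps)
  define r1 where "r1 = ((1 - t / (q * L1)) * (1 - t / (q * L2))) / ((1 - a * t / (q * H1)) * (1 - a * t / (q * H2)))"
  define r2 where "r2 = ((1 - a * t / H1) * (1 - a * t / H2)) / ((1 - t / L1) * (1 - t / L2))"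
  define r1q where "r1q = ((1 - t / L1) * (1 - t / L2)) / ((1 - a * t / H1) * (1 - a * t / H2))"
  have e1: "Vm = V0 * r1" unfolding r1_def using hm nz2 by (simp add: eq_divide_eq)
  have e2: "Vp = V0 * r2" unfolding r2_def using hp nz2 by (simp add: eq_divide_eq)
  have e3: "V1 * (1 - a * t / x) = V0 * r2 * (1 - t / x)" unfolding r2_def
    by (rule divW[OF _ h1]) (use nz2 in simp)
  have e4: "r1q * r2 = 1" unfolding r1q_def r2_def using nz2 by simp
  have e5: "r1 * ((x - H1) * (x - H2) / x * qa1 * (t / q) - (1 - a * t / (q * x)) * (qa1 * (x * t / q - H1 * H2 / a)))
      = Cx * Q - t * Y1 / q + t^2 * Cz * A * B / q^2"
    unfolding M1 Km' r1_def be_def by (rule e5g) (use nz2 in simp)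
  have e6: "r2 * ((x - L1) * (x - L2) / x * qa2 * (q * t) + (1 - t / x) * (qa2 * (q * L1 * L2 - x * (q * t))))
      = Cx - t * Y2 * q + t^2 * Cz * q^2"
    unfolding M2 Kp[symmetric] r2_def by (rule e6g) (use nz2 in simp)
  note L = lin_asm2[OF e1 e2 e3 e4 e5 e6 M0, where pz=p0 and pm=pm and pp=pp and E=E]
  have G1: "G8f q a qa1 qa2 H1 H2 L1 L2 x V1 (q * t) p0 pp
     = V1 * ((1 - a * t / x) * (qa2 * (q * L1 * L2 - x * (q * t)) * pp + qa1 * (x * t - H1 * H2 / a) * r1q * p0))"
  proof -
    have "a * (q * t) / (q * x) = a * t / x" "x * (q * t) / q = x * t" "q * t / (q * L1) = t / L1" "q * t / (q * L2) = t / L2"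
      "a * (q * t) / (q * H1) = a * t / H1" "a * (q * t) / (q * H2) = a * t / H2"
      using nz by auto
    then show ?thesis unfolding G8f_def r1q_def by (simp only:)
  qed
  have G0: "G8f q a qa1 qa2 H1 H2 L1 L2 x V0 t pm p0
     = V0 * ((1 - a * t / (q * x)) * (qa2 * (q * L1 * L2 - x * t) * p0 + qa1 * (x * t / q - H1 * H2 / a) * r1 * pm))"
    unfolding G8f_def r1_def ..
  have Dx: "Dexp q qN a qa1 qa2 H1 H2 L1 L2 E t pm p0 pp =
     (- Cx * (1 + Q) - t^2 * Cz * (A + B)) * p0 - E * t * p0 + (Cx * Q - t * Y1 / q + t^2 * Cz * A * B / q^2) * pm
       + (Cx - t * Y2 * q + t^2 * Cz * q^2) * pp"
  proof -
    have "Dexp q qN a qa1 qa2 H1 H2 L1 L2 E t pm p0 pp = Cx * (pp - (1 + Q) * p0 + Q * pm) - E * t * p0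
     - t * (Y1 / q * pm + Y2 * q * pp)
     + t ^ 2 * Cz * (q ^ 2 * pp - (A + B) * p0 + A * B / q ^ 2 * pm)"
      unfolding Dexp_def Let_def Cx_def Q_def Y1_def Y2_def Cz_def A_def B_def ..
    also have "\<dots> = (- Cx * (1 + Q) - t^2 * Cz * (A + B)) * p0 - E * t * p0
      + (Cx * Q - t * Y1 / q + t^2 * Cz * A * B / q^2) * pm + (Cx - t * Y2 * q + t^2 * Cz * q^2) * pp"
      by (simp add: algebra_simps)
    finally show ?thesis .
  qed
  have "(x - H1) * (x - H2) / x * qa1 * Vm * (t / q) * pm + (x - L1) * (x - L2) / x * qa2 * Vp * (q * t) * pp
      - ((qa1 + qa2) * x + qa1 / a * H1 * H2 * (1 + 1 / (q * qN)) / x + E) * V0 * t * p0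
    = G8f q a qa1 qa2 H1 H2 L1 L2 x V0 t pm p0 - G8f q a qa1 qa2 H1 H2 L1 L2 x V1 (q * t) p0 pp
      + V0 * Dexp q qN a qa1 qa2 H1 H2 L1 L2 E t pm p0 pp"
    unfolding G0 G1 Dx by (rule L)
  then show ?thesis using D by simp
qed

lemma qpinf_rec':
  fixes c q :: complex
  assumes "norm q < 1" "c' = c * q"
  shows "qpinf q c = (1 - c) * qpinf q c'"
  unfolding assms(2) by (rule qpinf_rec[OF assms(1)])

lemma vg_alg:
  fixes fq f1 f2 fb1 fb2 fb3 aq a1 a2 b1 b2 b3 :: complex
  assumes "b1 \<noteq> 0" "b2 \<noteq> 0" "b3 \<noteq> 0" "fb1 \<noteq> 0" "fb2 \<noteq> 0" "fb3 \<noteq> 0"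
  shows "fq * f1 * f2 / (fb1 * fb2 * fb3) * (aq * a1 * a2)
     = (aq * fq) * (a1 * f1) * (a2 * f2) / ((b1 * fb1) * (b2 * fb2) * (b3 * fb3)) * (b1 * b2 * b3)"
  using assms by (simp add: field_simps)

lemma Vg_succ:
  fixes q :: complex
  assumes q: "norm q < 1" and nd: "nondeg q B1" "nondeg q B2" "nondeg q B3"
  shows "Vg q B1 B2 B3 D1 D2 (Suc n) * ((1 - q * q ^ n) * (1 - D1 * q ^ n) * (1 - D2 * q ^ n))
       = Vg q B1 B2 B3 D1 D2 n * ((1 - B1 * q ^ n) * (1 - B2 * q ^ n) * (1 - B3 * q ^ n))"
proof -
  have r: "qpinf q (c * q ^ n) = (1 - c * q ^ n) * qpinf q (c * q ^ Suc n)" for c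
    by (rule qpinf_rec'[OF q]) (simp add: algebra_simps)
  have nz: "qpinf q (c * q ^ m) \<noteq> 0" "1 - c * q ^ m \<noteq> 0" if "nondeg q c" for c m
    using nondeg_qpinf[OF q nondeg_shift[OF that]] nondeg_one[OF that] by auto
  show ?thesis
    unfolding Vg_def r[of q] r[of D1] r[of D2] r[of B1] r[of B2] r[of B3]
    by (rule vg_alg) (use nz[OF nd(1)] nz[OF nd(2)] nz[OF nd(3)] nz(1)[OF nd(1), of "Suc n"]
      nz(1)[OF nd(2), of "Suc n"] nz(1)[OF nd(3), of "Suc n"] in auto)
qed

lemma Vg_one:
  fixes q :: complex
  assumes q: "norm q < 1" and nd: "nondeg q B1" "nondeg q B2" "nondeg q B3" "nondeg q B3'"
    and e: "B3' = B3 * q" "D2' = D2 * q"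
  shows "Vg q B1 B2 B3' D1 D2' n * (1 - D2 * q ^ n) = Vg q B1 B2 B3 D1 D2 n * (1 - B3 * q ^ n)"
proof -
  have r: "qpinf q (c * q ^ n) = (1 - c * q ^ n) * qpinf q (c' * q ^ n)" if "c' = c * q" for c c'
    by (rule qpinf_rec'[OF q]) (simp add: that algebra_simps)
  have nz: "qpinf q (c * q ^ m) \<noteq> 0" "1 - c * q ^ m \<noteq> 0" if "nondeg q c" for c m
    using nondeg_qpinf[OF q nondeg_shift[OF that]] nondeg_one[OF that] by auto
  show ?thesis
    unfolding Vg_def r[OF e(1)] r[OF e(2)]
    using nz[OF nd(1)] nz[OF nd(2)] nz[OF nd(3)] nz[OF nd(4)]
    by (simp add: field_simps)
qed

lemma vg_alg2:
  fixes fq f1 f2 fb1 fb2 fb3 a1 a2 b2 b3 :: complex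
  assumes "b2 \<noteq> 0" "b3 \<noteq> 0" "fb1 \<noteq> 0" "fb2 \<noteq> 0" "fb3 \<noteq> 0"
  shows "fq * f1 * f2 / (fb1 * fb2 * fb3) * (a1 * a2)
     = fq * (a1 * f1) * (a2 * f2) / (fb1 * (b2 * fb2) * (b3 * fb3)) * (b2 * b3)"
  using assms by (simp add: field_simps)

lemma Vg_two:
  fixes q :: complex
  assumes q: "norm q < 1" and nd: "nondeg q B1" "nondeg q B2" "nondeg q B3" "nondeg q B2'" "nondeg q B3'"
    and e: "B2' = B2 * q" "B3' = B3 * q" "D1' = D1 * q" "D2' = D2 * q"
  shows "Vg q B1 B2' B3' D1' D2' n * ((1 - D1 * q ^ n) * (1 - D2 * q ^ n))
       = Vg q B1 B2 B3 D1 D2 n * ((1 - B2 * q ^ n) * (1 - B3 * q ^ n))"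
proof -
  have r: "qpinf q (c * q ^ n) = (1 - c * q ^ n) * qpinf q (c' * q ^ n)" if "c' = c * q" for c c'
    by (rule qpinf_rec'[OF q]) (simp add: that algebra_simps)
  have nz: "qpinf q (c * q ^ m) \<noteq> 0" "1 - c * q ^ m \<noteq> 0" if "nondeg q c" for c m
    using nondeg_qpinf[OF q nondeg_shift[OF that]] nondeg_one[OF that] by auto
  show ?thesis
    unfolding Vg_def r[OF e(1)] r[OF e(2)] r[OF e(3)] r[OF e(4)]
    using nz[OF nd(1)] nz[OF nd(2)] nz[OF nd(3)] nz[OF nd(4)] nz[OF nd(5)]
    by (intro vg_alg2) auto
qed

lemma pol_cont: "isCont (pol C N) z"
  unfolding pol_def by (intro continuous_intros)

lemma pol_lim:
  assumes "f \<longlonglongrightarrow> 0"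
  shows "(\<lambda>n. pol C N (f n)) \<longlonglongrightarrow> C 0"
proof -
  have "(\<lambda>n. pol C N (f n)) \<longlonglongrightarrow> pol C N 0"
    by (rule isCont_tendsto_compose[OF pol_cont assms])
  moreover have "pol C N 0 = C 0"
  proof -
    have "pol C N 0 = (\<Sum>k\<le>N. if k = 0 then C k else 0)"
      unfolding pol_def by (intro sum.cong) (auto simp: power_0_left)
    then show ?thesis by simp
  qed
  ultimately show ?thesis by simp
qed

lemma lattice_lim:
  fixes q S :: complex
  assumes "norm q < 1"
  shows "(\<lambda>n. S * q ^ n) \<longlonglongrightarrow> 0"
  using LIMSEQ_power_zero[of q] assms by (intro tendsto_mult_right_zero) (simp add: LIMSEQ_power_zero)

lemma fin_alg:
  fixes cm A1 s1 K A2 s2 c0 xa s0 E q al bb :: complex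
  assumes "cm * A1 * s1 + K * A2 * s2 - c0 * xa * s0 - E * xa * s0 = xa * (0 - (al + - bb))"
  shows "cm * ((1 - q) * A1 * s1) + K * ((1 - q) * A2 * s2) - c0 * ((1 - q) * xa * s0)
     = E * ((1 - q) * xa * s0) - (1 - q) * xa * (al - bb)"
proof -
  have "cm * ((1 - q) * A1 * s1) + K * ((1 - q) * A2 * s2) - c0 * ((1 - q) * xa * s0) - (E * ((1 - q) * xa * s0) - (1 - q) * xa * (al - bb))
    = (1 - q) * ((cm * A1 * s1 + K * A2 * s2 - c0 * xa * s0 - E * xa * s0) - xa * (0 - (al + - bb)))"
    by (simp add: algebra_simps)
  then show ?thesis using assms by simp
qed

lemma typeI:
  fixes q a qa1 qa2 H1 H2 L1 L2 qN x E xa S :: complex and C :: "nat \<Rightarrow> complex" and N :: nat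
  assumes q: "norm q < 1" "q \<noteq> 0"
    and nz: "qN \<noteq> 0" "a \<noteq> 0" "qa1 \<noteq> 0" "H1 \<noteq> 0" "H2 \<noteq> 0" "L1 \<noteq> 0" "L2 \<noteq> 0" "x \<noteq> 0"
    and rel: "qa2 = H1 * H2 * qa1 / (q * qN * a^2 * L1 * L2)"
    and D: "\<And>t. Dexp q qN a qa1 qa2 H1 H2 L1 L2 E t (pol C N (t / q)) (pol C N t) (pol C N (q * t)) = 0"
    and C0: "C 0 = 1"
    and S: "S = q * L1"
    and nd: "nondeg q (a * S / H1)" "nondeg q (a * S / H2)" "nondeg q (S / x)" "nondeg q (S / L2)" "nondeg q (a * S / x)"
      "nondeg q (q * (S / x))" "nondeg q (q * (a * S / x))" "nondeg q (S / x / q)" "nondeg q (a * S / x / q)"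
  shows "(x - H1) * (x - H2) / x * gshape q (qa1 * xa) (a * S / H1) (a * S / H2) (q * (S / x)) (S / L2) (q * (a * S / x)) S C N
       + qa1 * qa2 * ((x - L1) * (x - L2) / x) * gshape q (xa / qa1) (a * S / H1) (a * S / H2) (S / x / q) (S / L2) (a * S / x / q) S C N
       - ((qa1 + qa2) * x + qa1 / a * H1 * H2 * (1 + 1 / (q * qN)) / x) * gshape q xa (a * S / H1) (a * S / H2) (S / x) (S / L2) (a * S / x) S C N
     = E * gshape q xa (a * S / H1) (a * S / H2) (S / x) (S / L2) (a * S / x) S C N
       - (1 - q) * xa * (q * qa2 * L1 * L2 - qa1 / a * H1 * H2)"
proof -
  define B1 where "B1 = a * S / H1"
  define B2 where "B2 = a * S / H2"
  define B3 where "B3 = S / x"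
  define D1 where "D1 = S / L2"
  define D2 where "D2 = a * S / x"
  define P where "P = pol C N"
  define t where "t = (\<lambda>n::nat. S * q ^ n)"
  define Vm where "Vm = Vg q B1 B2 (q * B3) D1 (q * D2)"
  define V0 where "V0 = Vg q B1 B2 B3 D1 D2"
  define Vp where "Vp = Vg q B1 B2 (B3 / q) D1 (D2 / q)"
  define um where "um = (\<lambda>n. Vm n * (S * q ^ n) * pol C N (S * q ^ n))"
  define u0 where "u0 = (\<lambda>n. V0 n * (S * q ^ n) * pol C N (S * q ^ n))"
  define up where "up = (\<lambda>n. Vp n * (S * q ^ n) * pol C N (S * q ^ n))"
  note nd' = nd[folded B1_def B2_def B3_def D1_def D2_def]
  have Gm: "summable um \<and> gshape q (qa1 * xa) B1 B2 (q * B3) D1 (q * D2) S C N = (1 - q) * (qa1 * xa) * suminf um"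
    unfolding um_def Vm_def by (rule lemmaG[OF q(1) nd'(1,2,6,4,7)])
  have G0: "summable u0 \<and> gshape q xa B1 B2 B3 D1 D2 S C N = (1 - q) * xa * suminf u0"
    unfolding u0_def V0_def by (rule lemmaG[OF q(1) nd'(1,2,3,4,5)])
  have Gp: "summable up \<and> gshape q (xa / qa1) B1 B2 (B3 / q) D1 (D2 / q) S C N = (1 - q) * (xa / qa1) * suminf up"
    unfolding up_def Vp_def by (rule lemmaG[OF q(1) nd'(1,2,8,4,9)])
  have nq: "nondeg q q" by (rule nondeg_q[OF q(1)])
  have nzq: "q ^ n \<noteq> 0" for n using q(2) by simp
  define al where "al = q * qa2 * L1 * L2"
  define be where "be = - (qa1 / a * H1 * H2)"
  define Gs where "Gs = (\<lambda>n. V0 n * ((1 - t n / (q * L1)) * (1 - t n / (q * L2)) *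
      (al * ((1 - a * t n / (q * x)) / (1 - t n / (q * x))) * P (t n) + be * P (t n / q))))"
  have step: "(x - H1) * (x - H2) / x * qa1 * Vm n * t n * P (t n) + (x - L1) * (x - L2) / x * qa2 * Vp n * t n * P (t n)
      - ((qa1 + qa2) * x + qa1 / a * H1 * H2 * (1 + 1 / (q * qN)) / x + E) * V0 n * t n * P (t n)
      = Gs n - Gs (Suc n)" for n
  proof -
    have ar: "D2 * q ^ n = a * t n / x" "B3 * q ^ n = t n / x" "D2 / q * q ^ n = a * t n / (q * x)"
      "B3 / q * q ^ n = t n / (q * x)" "q * q ^ n = t n / L1" "D1 * q ^ n = t n / L2"
      "B1 * q ^ n = a * t n / H1" "B2 * q ^ n = a * t n / H2"
      unfolding t_def B1_def B2_def B3_def D1_def D2_def S using q(2) nz by (auto simp: field_simps)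
    have hm: "Vm n * (1 - a * t n / x) = V0 n * (1 - t n / x)"
      using Vg_one[OF q(1) nd'(1,2,3,6), of "q * D2" D2 D1 n] unfolding Vm_def V0_def ar by (simp add: mult.commute)
    have hp: "Vp n * (1 - t n / (q * x)) = V0 n * (1 - a * t n / (q * x))"
      using Vg_one[OF q(1) nd'(1,2,8,3), of D2 "D2 / q" D1 n] q(2) unfolding Vp_def V0_def ar by simp
    have h1: "V0 (Suc n) * ((1 - t n / L1) * (1 - t n / L2) * (1 - a * t n / x))
        = V0 n * ((1 - a * t n / H1) * (1 - a * t n / H2) * (1 - t n / x))"
      using Vg_succ[OF q(1) nd'(1,2,3), of D1 D2 n] unfolding V0_def ar .
    have nz2: "1 - t n / L1 \<noteq> 0" "1 - t n / L2 \<noteq> 0" "1 - a * t n / x \<noteq> 0" "1 - t n / (q * x) \<noteq> 0" "1 - t n / x \<noteq> 0"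
      using nondeg_one[OF nq, of n] nondeg_one[OF nd'(4), of n] nondeg_one[OF nd'(5), of n]
        nondeg_one[OF nd'(8), of n] nondeg_one[OF nd'(3), of n] unfolding ar by auto
    note cI = coreI[OF q(2) nz nz2 rel hm hp h1 D[of "t n"]]
    have sh: "q * t n / (q * L1) = t n / L1" "q * t n / (q * L2) = t n / L2" "a * (q * t n) / (q * x) = a * t n / x"
      "q * t n / (q * x) = t n / x" "t (Suc n) = q * t n" "q * t n / q = t n"
      unfolding t_def using q(2) by (auto simp: field_simps)
    have e2: "Gs (Suc n) = V0 (Suc n) * ((1 - t n / L1) * (1 - t n / L2) *
      (al * ((1 - a * t n / x) / (1 - t n / x)) * P (q * t n) + be * P (t n)))"
      unfolding Gs_def sh ..
    show ?thesis unfolding e2 unfolding Gs_def P_def al_def be_def by (rule cI)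
  qed
  have t0: "t \<longlonglongrightarrow> 0" unfolding t_def by (rule lattice_lim[OF q(1)])
  have tq: "(\<lambda>n. t n / q) \<longlonglongrightarrow> 0" by (rule tendsto_divide_zero[OF t0])
  have Plim: "(\<lambda>n. P (t n)) \<longlonglongrightarrow> 1" "(\<lambda>n. P (t n / q)) \<longlonglongrightarrow> 1"
    unfolding P_def using pol_lim[OF t0, of C N] pol_lim[OF tq, of C N] C0 by auto
  have Vlim: "V0 \<longlonglongrightarrow> 1" unfolding V0_def by (rule Vg_lim[OF q(1) nd'(1,2,3,4,5)])
  have "Gs \<longlonglongrightarrow> 1 * ((1 - 0 / (q * L1)) * (1 - 0 / (q * L2)) *
      (al * ((1 - a * 0 / (q * x)) / (1 - 0 / (q * x))) * 1 + be * 1))"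
    unfolding Gs_def by (intro tendsto_intros Vlim t0 Plim) (use q(2) nz in auto)
  then have Glim: "Gs \<longlonglongrightarrow> al + be" by simp
  have Gs0: "Gs 0 = 0" unfolding Gs_def t_def S using q(2) nz by simp
  have tel: "(\<lambda>n. xa * (Gs n - Gs (Suc n))) sums (xa * (0 - (al + be)))"
    using sums_mult[OF telescope_sums'[OF Glim], of xa] Gs0 by simp
  define cm where "cm = (x - H1) * (x - H2) / x"
  define cp where "cp = (x - L1) * (x - L2) / x"
  define c0 where "c0 = (qa1 + qa2) * x + qa1 / a * H1 * H2 * (1 + 1 / (q * qN)) / x"
  have ser: "(\<lambda>n. cm * (qa1 * xa) * um n + qa1 * qa2 * cp * (xa / qa1) * up n - c0 * xa * u0 n - E * xa * u0 n)
     sums (cm * (qa1 * xa) * suminf um + qa1 * qa2 * cp * (xa / qa1) * suminf up - c0 * xa * suminf u0 - E * xa * suminf u0)"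
    using Gm G0 Gp by (intro sums_add sums_diff sums_mult summable_sums) auto
  have eqf: "(\<lambda>n. cm * (qa1 * xa) * um n + qa1 * qa2 * cp * (xa / qa1) * up n - c0 * xa * u0 n - E * xa * u0 n)
      = (\<lambda>n. xa * (Gs n - Gs (Suc n)))"
  proof
    fix n
    have "cm * (qa1 * xa) * um n + qa1 * qa2 * cp * (xa / qa1) * up n - c0 * xa * u0 n - E * xa * u0 n
        = xa * ((x - H1) * (x - H2) / x * qa1 * Vm n * t n * P (t n) + (x - L1) * (x - L2) / x * qa2 * Vp n * t n * P (t n)
      - ((qa1 + qa2) * x + qa1 / a * H1 * H2 * (1 + 1 / (q * qN)) / x + E) * V0 n * t n * P (t n))"
      unfolding um_def up_def u0_def cm_def cp_def c0_def t_def P_def using nz by (simp add: field_simps)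
    then show "cm * (qa1 * xa) * um n + qa1 * qa2 * cp * (xa / qa1) * up n - c0 * xa * u0 n - E * xa * u0 n
        = xa * (Gs n - Gs (Suc n))" unfolding step .
  qed
  have fin: "cm * (qa1 * xa) * suminf um + qa1 * qa2 * cp * (xa / qa1) * suminf up - c0 * xa * suminf u0 - E * xa * suminf u0
      = xa * (0 - (al + be))"
    using sums_unique2[OF ser[unfolded eqf] tel] .
  have g1: "gshape q (qa1 * xa) B1 B2 (q * B3) D1 (q * D2) S C N = (1 - q) * (qa1 * xa) * suminf um" using Gm by blast
  have g0: "gshape q xa B1 B2 B3 D1 D2 S C N = (1 - q) * xa * suminf u0" using G0 by blast
  have gp: "gshape q (xa / qa1) B1 B2 (B3 / q) D1 (D2 / q) S C N = (1 - q) * (xa / qa1) * suminf up" using Gp by blast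
  show ?thesis
    unfolding B1_def[symmetric] B2_def[symmetric] B3_def[symmetric] D1_def[symmetric] D2_def[symmetric]
      cm_def[symmetric] cp_def[symmetric] c0_def[symmetric] g1 g0 gp
    by (rule fin_alg[OF fin[unfolded al_def be_def]])
qed


lemma typeII:
  fixes q a qa1 qa2 H1 H2 L1 L2 qN x E xa S :: complex and C :: "nat \<Rightarrow> complex" and N :: nat
  assumes q: "norm q < 1" "q \<noteq> 0"
    and nz: "qN \<noteq> 0" "a \<noteq> 0" "qa1 \<noteq> 0" "H1 \<noteq> 0" "H2 \<noteq> 0" "L1 \<noteq> 0" "L2 \<noteq> 0" "x \<noteq> 0"
    and rel: "qa2 = H1 * H2 * qa1 / (q * qN * a^2 * L1 * L2)"
    and D: "\<And>t. Dexp q qN a qa1 qa2 H1 H2 L1 L2 E t (pol C N (t / q)) (pol C N t) (pol C N (q * t)) = 0"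
    and C0: "C 0 = 1"
    and S: "S = q * x / a"
    and nd: "nondeg q (S / x)" "nondeg q (a * S / H1)" "nondeg q (a * S / H2)" "nondeg q (S / L1)" "nondeg q (S / L2)"
      "nondeg q (a * S / H1 / q)" "nondeg q (a * S / H2 / q)" "nondeg q (S / L1 / q)" "nondeg q (S / L2 / q)"
      "nondeg q (q * (a * S / H1))" "nondeg q (q * (a * S / H2))" "nondeg q (q * (S / L1))" "nondeg q (q * (S / L2))"
  shows "(x - H1) * (x - H2) / x * gshape q (qa1 * xa) (S / x) (a * S / H1 / q) (a * S / H2 / q) (S / L1 / q) (S / L2 / q) (S / q) C N
       + qa1 * qa2 * ((x - L1) * (x - L2) / x) * gshape q (xa / qa1) (S / x) (q * (a * S / H1)) (q * (a * S / H2)) (q * (S / L1)) (q * (S / L2)) (q * S) C N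
       - ((qa1 + qa2) * x + qa1 / a * H1 * H2 * (1 + 1 / (q * qN)) / x) * gshape q xa (S / x) (a * S / H1) (a * S / H2) (S / L1) (S / L2) S C N
     = E * gshape q xa (S / x) (a * S / H1) (a * S / H2) (S / L1) (S / L2) S C N
       - (1 - q) * xa * (q * qa2 * L1 * L2 - qa1 / a * H1 * H2)"
proof -
  define B1 where "B1 = S / x"
  define B2 where "B2 = a * S / H1"
  define B3 where "B3 = a * S / H2"
  define D1 where "D1 = S / L1"
  define D2 where "D2 = S / L2"
  define P where "P = pol C N"
  define t where "t = (\<lambda>n::nat. S * q ^ n)"
  define Vm where "Vm = Vg q B1 (B2 / q) (B3 / q) (D1 / q) (D2 / q)"
  define V0 where "V0 = Vg q B1 B2 B3 D1 D2"
  define Vp where "Vp = Vg q B1 (q * B2) (q * B3) (q * D1) (q * D2)"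
  define um where "um = (\<lambda>n. Vm n * (S / q * q ^ n) * pol C N (S / q * q ^ n))"
  define u0 where "u0 = (\<lambda>n. V0 n * (S * q ^ n) * pol C N (S * q ^ n))"
  define up where "up = (\<lambda>n. Vp n * (q * S * q ^ n) * pol C N (q * S * q ^ n))"
  note nd' = nd[folded B1_def B2_def B3_def D1_def D2_def]
  have Gm: "summable um \<and> gshape q (qa1 * xa) B1 (B2 / q) (B3 / q) (D1 / q) (D2 / q) (S / q) C N = (1 - q) * (qa1 * xa) * suminf um"
    unfolding um_def Vm_def by (rule lemmaG[OF q(1) nd'(1,6,7,8,9)])
  have G0: "summable u0 \<and> gshape q xa B1 B2 B3 D1 D2 S C N = (1 - q) * xa * suminf u0"
    unfolding u0_def V0_def by (rule lemmaG[OF q(1) nd'(1,2,3,4,5)])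
  have Gp: "summable up \<and> gshape q (xa / qa1) B1 (q * B2) (q * B3) (q * D1) (q * D2) (q * S) C N = (1 - q) * (xa / qa1) * suminf up"
    unfolding up_def Vp_def by (rule lemmaG[OF q(1) nd'(1,10,11,12,13)])
  have nq: "nondeg q q" by (rule nondeg_q[OF q(1)])
  define Gs where "Gs = (\<lambda>n. G8f q a qa1 qa2 H1 H2 L1 L2 x (V0 n) (t n) (P (t n / q)) (P (t n)))"
  have step: "(x - H1) * (x - H2) / x * qa1 * Vm n * (t n / q) * P (t n / q) + (x - L1) * (x - L2) / x * qa2 * Vp n * (q * t n) * P (q * t n)
      - ((qa1 + qa2) * x + qa1 / a * H1 * H2 * (1 + 1 / (q * qN)) / x + E) * V0 n * t n * P (t n)
      = Gs n - Gs (Suc n)" for n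
  proof -
    have ar: "B1 * q ^ n = t n / x" "B2 * q ^ n = a * t n / H1" "B3 * q ^ n = a * t n / H2" "D1 * q ^ n = t n / L1"
      "D2 * q ^ n = t n / L2" "q * q ^ n = a * t n / x"
      "B2 / q * q ^ n = a * t n / (q * H1)" "B3 / q * q ^ n = a * t n / (q * H2)"
      "D1 / q * q ^ n = t n / (q * L1)" "D2 / q * q ^ n = t n / (q * L2)"
      unfolding t_def B1_def B2_def B3_def D1_def D2_def S using q(2) nz by (auto simp: field_simps)
    have hm: "Vm n * ((1 - a * t n / (q * H1)) * (1 - a * t n / (q * H2))) = V0 n * ((1 - t n / (q * L1)) * (1 - t n / (q * L2)))"
      using Vg_two[OF q(1) nd'(1,6,7,2,3), of D1 "D1 / q" D2 "D2 / q" n] q(2)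
      unfolding Vm_def V0_def ar by simp
    have hp: "Vp n * ((1 - t n / L1) * (1 - t n / L2)) = V0 n * ((1 - a * t n / H1) * (1 - a * t n / H2))"
      using Vg_two[OF q(1) nd'(1,2,3,10,11), of "q * D1" D1 "q * D2" D2 n]
      unfolding Vp_def V0_def ar by (simp add: mult.commute)
    have h1: "V0 (Suc n) * ((1 - t n / L1) * (1 - t n / L2) * (1 - a * t n / x))
        = V0 n * ((1 - a * t n / H1) * (1 - a * t n / H2) * (1 - t n / x))"
      using Vg_succ[OF q(1) nd'(1,2,3), of D1 D2 n] unfolding V0_def ar by (simp add: ac_simps)
    have nz2: "1 - t n / L1 \<noteq> 0" "1 - t n / L2 \<noteq> 0" "1 - a * t n / x \<noteq> 0" "1 - a * t n / H1 \<noteq> 0" "1 - a * t n / H2 \<noteq> 0"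
      "1 - a * t n / (q * H1) \<noteq> 0" "1 - a * t n / (q * H2) \<noteq> 0"
      using nondeg_one[OF nd'(4), of n] nondeg_one[OF nd'(5), of n] nondeg_one[OF nq, of n]
        nondeg_one[OF nd'(2), of n] nondeg_one[OF nd'(3), of n] nondeg_one[OF nd'(6), of n] nondeg_one[OF nd'(7), of n]
      unfolding ar by auto
    note cII = coreII[OF q(2) nz nz2 rel hm hp h1 D[of "t n"]]
    have sh: "t (Suc n) = q * t n" "q * t n / q = t n" unfolding t_def using q(2) by auto
    have e2: "Gs (Suc n) = G8f q a qa1 qa2 H1 H2 L1 L2 x (V0 (Suc n)) (q * t n) (P (t n)) (P (q * t n))"
      unfolding Gs_def sh ..
    show ?thesis unfolding e2 unfolding Gs_def P_def by (rule cII)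
  qed
  have t0: "t \<longlonglongrightarrow> 0" unfolding t_def by (rule lattice_lim[OF q(1)])
  have tq: "(\<lambda>n. t n / q) \<longlonglongrightarrow> 0" by (rule tendsto_divide_zero[OF t0])
  have Plim: "(\<lambda>n. P (t n)) \<longlonglongrightarrow> 1" "(\<lambda>n. P (t n / q)) \<longlonglongrightarrow> 1"
    unfolding P_def using pol_lim[OF t0, of C N] pol_lim[OF tq, of C N] C0 by auto
  have Vlim: "V0 \<longlonglongrightarrow> 1" unfolding V0_def by (rule Vg_lim[OF q(1) nd'(1,2,3,4,5)])
  have "Gs \<longlonglongrightarrow> 1 * ((1 - a * 0 / (q * x)) * (qa2 * (q * L1 * L2 - x * 0) * 1
       + qa1 * (x * 0 / q - H1 * H2 / a) * (((1 - 0 / (q * L1)) * (1 - 0 / (q * L2))) / ((1 - a * 0 / (q * H1)) * (1 - a * 0 / (q * H2)))) * 1))"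
    unfolding Gs_def G8f_def by (intro tendsto_intros Vlim t0 tq Plim) (use q(2) nz in auto)
  then have Glim: "Gs \<longlonglongrightarrow> q * qa2 * L1 * L2 + - (qa1 / a * H1 * H2)" by (simp add: algebra_simps)
  have Gs0: "Gs 0 = 0" unfolding Gs_def G8f_def t_def S using q(2) nz by simp
  have tel: "(\<lambda>n. xa * (Gs n - Gs (Suc n))) sums (xa * (0 - (q * qa2 * L1 * L2 + - (qa1 / a * H1 * H2))))"
    using sums_mult[OF telescope_sums'[OF Glim], of xa] Gs0 by simp
  define cm where "cm = (x - H1) * (x - H2) / x"
  define cp where "cp = (x - L1) * (x - L2) / x"
  define c0 where "c0 = (qa1 + qa2) * x + qa1 / a * H1 * H2 * (1 + 1 / (q * qN)) / x"
  have ser: "(\<lambda>n. cm * (qa1 * xa) * um n + qa1 * qa2 * cp * (xa / qa1) * up n - c0 * xa * u0 n - E * xa * u0 n)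
     sums (cm * (qa1 * xa) * suminf um + qa1 * qa2 * cp * (xa / qa1) * suminf up - c0 * xa * suminf u0 - E * xa * suminf u0)"
    using Gm G0 Gp by (intro sums_add sums_diff sums_mult summable_sums) auto
  have eqf: "(\<lambda>n. cm * (qa1 * xa) * um n + qa1 * qa2 * cp * (xa / qa1) * up n - c0 * xa * u0 n - E * xa * u0 n)
      = (\<lambda>n. xa * (Gs n - Gs (Suc n)))"
  proof
    fix n
    have "cm * (qa1 * xa) * um n + qa1 * qa2 * cp * (xa / qa1) * up n - c0 * xa * u0 n - E * xa * u0 n
        = xa * ((x - H1) * (x - H2) / x * qa1 * Vm n * (t n / q) * P (t n / q) + (x - L1) * (x - L2) / x * qa2 * Vp n * (q * t n) * P (q * t n)
      - ((qa1 + qa2) * x + qa1 / a * H1 * H2 * (1 + 1 / (q * qN)) / x + E) * V0 n * t n * P (t n))"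
    proof -
      have tt: "S / q * q ^ n = t n / q" "q * S * q ^ n = q * t n" "S * q ^ n = t n" unfolding t_def by auto
      show ?thesis unfolding um_def up_def u0_def cm_def cp_def c0_def tt P_def using nz by (simp add: field_simps)
    qed
    then show "cm * (qa1 * xa) * um n + qa1 * qa2 * cp * (xa / qa1) * up n - c0 * xa * u0 n - E * xa * u0 n
        = xa * (Gs n - Gs (Suc n))" unfolding step .
  qed
  have fin: "cm * (qa1 * xa) * suminf um + qa1 * qa2 * cp * (xa / qa1) * suminf up - c0 * xa * suminf u0 - E * xa * suminf u0
      = xa * (0 - (q * qa2 * L1 * L2 + - (qa1 / a * H1 * H2)))"
    using sums_unique2[OF ser[unfolded eqf] tel] .
  have g1: "gshape q (qa1 * xa) B1 (B2 / q) (B3 / q) (D1 / q) (D2 / q) (S / q) C N = (1 - q) * (qa1 * xa) * suminf um" using Gm by blast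
  have g0: "gshape q xa B1 B2 B3 D1 D2 S C N = (1 - q) * xa * suminf u0" using G0 by blast
  have gp: "gshape q (xa / qa1) B1 (q * B2) (q * B3) (q * D1) (q * D2) (q * S) C N = (1 - q) * (xa / qa1) * suminf up" using Gp by blast
  show ?thesis
    unfolding B1_def[symmetric] B2_def[symmetric] B3_def[symmetric] D1_def[symmetric] D2_def[symmetric]
      cm_def[symmetric] cp_def[symmetric] c0_def[symmetric] g1 g0 gp
    by (rule fin_alg[OF fin])
qed

lemma qpow_add: "qpow L (u + v) = qpow L u * qpow L v"
  unfolding qpow_def by (simp add: distrib_right exp_add)
lemma qpow_diff: "qpow L (u - v) = qpow L u / qpow L v"
  unfolding qpow_def by (simp add: left_diff_distrib exp_diff)
lemma qpow_minus: "qpow L (- u) = 1 / qpow L u"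
  unfolding qpow_def by (simp add: exp_minus inverse_eq_divide)
lemma qpow_nz: "qpow L u \<noteq> 0"
  unfolding qpow_def by simp
lemma qpow_1: "exp L = q \<Longrightarrow> qpow L 1 = q"
  unfolding qpow_def by simp
lemma qpow_nat: "exp L = q \<Longrightarrow> qpow L (of_nat n) = q ^ n"
  unfolding qpow_def by (metis exp_of_nat_mult)
lemma qpow_0: "qpow L 0 = 1"
  unfolding qpow_def by simp
lemma q1h: "qpow L 1 = qpow L (1/2) * qpow L (1/2)"
proof -
  have "qpow L 1 = qpow L (1/2 + 1/2)" by simp
  then show ?thesis by (simp only: qpow_add)
qed
lemma qqh: "exp L = q \<Longrightarrow> q = qpow L (1/2) * qpow L (1/2)"
  using q1h[of L] qpow_1[of L q] by simp
lemma qpow_cong: "u = v \<Longrightarrow> qpow L u = qpow L v" by simp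

lemma qpow_two: "qpow L 2 = qpow L 1 * qpow L 1"
  by (metis one_add_one qpow_add)

lemma qpow_2: "qpow L (2 * u) = qpow L u * qpow L u"
  by (metis mult_2 qpow_add)

lemma aop_generic:
  fixes x H1 H2 L1 L2 QQ A1 A2 K gm gp g0 :: complex
  shows "inverse x * (x - H1) * (x - H2) * gm + QQ * inverse x * (x - L1) * (x - L2) * gp - ((A1 + A2) * x + K * inverse x) * g0
    = (x - H1) * (x - H2) / x * gm + QQ * ((x - L1) * (x - L2) / x) * gp - ((A1 + A2) * x + K / x) * g0"
  by (simp add: divide_inverse algebra_simps)

lemma q3h: "qpow L (3/2) = qpow L 1 * qpow L (1/2)"
proof -
  have "qpow L (3/2) = qpow L (1 + 1/2)" by simp
  then show ?thesis by (simp only: qpow_add)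
qed

lemma Dexp_swap:
  fixes q qN a qa1 qa2 H1 H2 L1 L2 E t pm p0 pp :: complex
  shows "Dexp q qN a qa1 qa2 H2 H1 L2 L1 E t pm p0 pp = Dexp q qN a qa1 qa2 H1 H2 L1 L2 E t pm p0 pp"
proof -
  have f1: "q * qa2 * L2 * L1 = q * qa2 * L1 * L2" by (simp only: mult.assoc mult.commute[of L2 L1])
  have f2: "L2 + L1 = L1 + L2" "H2 + H1 = H1 + H2" by (rule add.commute)+
  note f = f1 f2
  show ?thesis unfolding Dexp_def Let_def f ..
qed

lemma gshape_cong:
  "b1 = b1' \<Longrightarrow> b2 = b2' \<Longrightarrow> b3 = b3' \<Longrightarrow> d1 = d1' \<Longrightarrow> d2 = d2' \<Longrightarrow> s = s' \<Longrightarrow>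
   gshape q xa b1 b2 b3 d1 d2 s C N = gshape q xa b1' b2' b3' d1' d2' s' C N"
  by simp

lemma nondeg_cong: "nondeg q b \<Longrightarrow> b = b' \<Longrightarrow> nondeg q b'" by simp

theorem theorem3p7:
  fixes q L :: complex and lg :: "complex \<Rightarrow> complex"
    and t1 t2 h1 h2 l1 l2 a1 a2 E0 x :: complex and N :: nat
  defines "b \<equiv> of_nat N + 1 :: complex"
  defines "lam \<equiv> lam1 h1 h2 l1 l2 a1 a2 b"
  defines "X \<equiv> xc L t1 t2 h1 h2 a1 lam N"
  defines "Y \<equiv> yc L t1 t2 h1 h2 l1 l2 a1 a2 lam N"
  defines "Z \<equiv> zc L a1 a2 lam N"
  defines "g \<equiv> (\<lambda>i y. gfun i q L lg t1 t2 h1 h2 l1 l2 a1 lam (cseq X Y Z E0) N y)"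
  assumes q: "0 < cmod q" "cmod q < 1" and L: "exp L = q"
    and lg_exp: "\<forall>y. y \<noteq> 0 \<longrightarrow> exp (lg y) = y"
    and lg_q: "\<forall>y. y \<noteq> 0 \<longrightarrow> lg (q * y) = L + lg y"
    and t: "t1 \<noteq> 0" "t2 \<noteq> 0"
    and hyp1: "\<forall>j<N. - lam - a1 \<noteq> of_nat j"
    and hyp2: "lam + a2 \<in> \<real>" "Re (lam + a2) > 1"
    and cE0: "cfin X Y Z E0 N = 0"
    and genX: "\<forall>n\<in>{1..N}. X n \<noteq> 0"
    and genx: "\<forall>i\<in>{6,7,8}. \<forall>y\<in>{x / q, x, q * x}. gen_at i q L t1 t2 h1 h2 l1 l2 a1 lam y"
  shows "(\<forall>i\<in>{6,7,8}. \<forall>j\<in>{6,7,8}.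
            Aop q L t1 t2 h1 h2 l1 l2 a1 a2 b (\<lambda>y. g i y - g j y) x = E0 * (g i x - g j x))
       \<and> (\<forall>i\<in>{6,7,8}.
            Aop q L t1 t2 h1 h2 l1 l2 a1 a2 b (g i) x
              = E0 * g i x - (1 - q) * exp (- a1 * lg x) * qpow L (- lam + h1 + h2 + 1)
                  * (qpow L (- lam - a1 - of_nat N) - 1) * t1 * t2)"
proof -
  have q0: "q \<noteq> 0" using q by auto
  have qn: "norm q < 1" using q by simp
  define a where "a = qpow L (lam + a1)"
  define qa1 where "qa1 = qpow L a1"
  define qa2 where "qa2 = qpow L a2"
  define H1 where "H1 = qpow L (h1 + 1/2) * t1"
  define H2 where "H2 = qpow L (h2 + 1/2) * t2"
  define L1 where "L1 = qpow L (l1 - 1/2) * t1"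
  define L2 where "L2 = qpow L (l2 - 1/2) * t2"
  define qN where "qN = q ^ N"
  define C where "C = cseq X Y Z E0"
  define xa where "xa = exp (- a1 * lg x)"
  have nz: "qN \<noteq> 0" "a \<noteq> 0" "qa1 \<noteq> 0" "H1 \<noteq> 0" "H2 \<noteq> 0" "L1 \<noteq> 0" "L2 \<noteq> 0" "qa2 \<noteq> 0"
    unfolding qN_def a_def qa1_def qa2_def H1_def H2_def L1_def L2_def using q0 t qpow_nz by auto
  have a2e: "a2 = h1 + h2 - l1 - l2 - a1 - of_nat N + 1 - 2 * lam"
    unfolding lam_def lam1_def b_def by (simp add: field_simps)
  have qa2e: "qpow L a2 = qpow L h1 * qpow L h2 * (qpow L (1/2) * qpow L (1/2)) /
      (qpow L l1 * qpow L l2 * qpow L a1 * (qpow L (1/2) * qpow L (1/2)) ^ N * (qpow L lam * qpow L lam))"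
    apply (subst a2e)
    apply (simp only: qpow_add qpow_diff qpow_minus q1h qqh[OF L] qpow_nat[OF L] qpow_2)
    apply (simp add: field_simps qpow_nz)
    done
  have rel: "qa2 = H1 * H2 * qa1 / (q * qN * a^2 * L1 * L2)"
    unfolding qa2_def H1_def H2_def qa1_def qN_def a_def L1_def L2_def
    apply (simp only: qpow_add qpow_diff qpow_minus q1h qqh[OF L] qpow_nat[OF L] qpow_2 qa2e)
    apply (simp add: field_simps qpow_nz t power2_eq_square)
    done
  have Xf: "\<And>n. X n = (q * qa2 * L1 * L2) * (q ^ n - 1) * (1 - (qN * a) / q ^ n)"
    unfolding X_def xc_def qa2_def L1_def L2_def qN_def a_def
    apply (simp only: qpow_add qpow_diff qpow_minus q1h qqh[OF L] qpow_nat[OF L] qpow_2 qpow_two qa2e)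
    apply (simp add: field_simps qpow_nz t power2_eq_square)
    done
  have Yf: "\<And>n. Y n = (q * qN * a * qa2 * (L1 + L2)) / q ^ n + (qa1 * (H1 + H2) / (a * q * qN)) * q ^ n"
    unfolding Y_def yc_def qa1_def qa2_def L1_def L2_def H1_def H2_def qN_def a_def
    apply (simp only: qpow_add qpow_diff qpow_minus q1h qqh[OF L] qpow_nat[OF L] qpow_2 qpow_two qa2e)
    apply (simp add: field_simps qpow_nz t power2_eq_square)
    done
  have Zf: "\<And>n. Z n = (qa1 / (qN * q^2)) * (q ^ n - ((q * qN * a * qa2 / qa1) + (qN * q^2)) + (q * qN * a * qa2 / qa1) * (qN * q^2) / q ^ n)"
    unfolding Z_def zc_def qa1_def qa2_def qN_def a_def
    apply (simp only: qpow_add qpow_diff qpow_minus q1h qqh[OF L] qpow_nat[OF L] qpow_2 qpow_two qa2e)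
    apply (simp add: field_simps qpow_nz t power2_eq_square)
    done
  have Z2: "Z (N + 2) = 0"
  proof -
    have "of_nat N - of_nat (N + 2) + 2 = (0::complex)" by simp
    then show ?thesis unfolding Z_def zc_def by (simp add: qpow_0)
  qed
  have Dx: "\<And>t. Dexp q qN a qa1 qa2 H1 H2 L1 L2 E0 t (pol C N (t / q)) (pol C N t) (pol C N (q * t)) = 0"
    unfolding Dexp_def Let_def C_def by (rule Deq[OF q0 Xf Yf Zf genX Z2 cE0])
  have C0: "C 0 = 1" unfolding C_def by simp
  have c0a: "qpow L ((h1 + h2 + l1 + l2 + a1 + a2) / 2) * qpow L (b / 2) = qpow L (h1 + h2 + 1 - lam)"
    unfolding qpow_add[symmetric] by (rule qpow_cong) (simp add: lam_def lam1_def b_def field_simps)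
  have c0b: "qpow L ((h1 + h2 + l1 + l2 + a1 + a2) / 2) * qpow L (- b / 2) = qpow L (h1 + h2 - lam - of_nat N)"
    unfolding qpow_add[symmetric] by (rule qpow_cong) (simp add: lam_def lam1_def b_def field_simps)
  have c0f: "qpow L ((h1 + h2 + l1 + l2 + a1 + a2) / 2) * (qpow L (b / 2) + qpow L (- b / 2)) * t1 * t2
      = qa1 / a * H1 * H2 * (1 + 1 / (q * qN))"
    unfolding distrib_left c0a c0b qa1_def a_def H1_def H2_def qN_def
    apply (simp only: qpow_add qpow_diff qpow_minus q1h qqh[OF L] qpow_nat[OF L] qpow_2 qpow_two)
    apply (simp add: field_simps qpow_nz t power2_eq_square)
    done
  have Aop_conv: "Aop q L t1 t2 h1 h2 l1 l2 a1 a2 b G x = (x - H1) * (x - H2) / x * G (x / q)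
      + qa1 * qa2 * ((x - L1) * (x - L2) / x) * G (q * x)
      - ((qa1 + qa2) * x + qa1 / a * H1 * H2 * (1 + 1 / (q * qN)) / x) * G x" for G
    unfolding Aop_def c0f qpow_add[of L a1 a2] H1_def[symmetric] H2_def[symmetric] L1_def[symmetric] L2_def[symmetric]
      qa1_def[symmetric] qa2_def[symmetric]
    by (rule aop_generic)
  have Kf: "(1 - q) * xa * (q * qa2 * L1 * L2 - qa1 / a * H1 * H2)
      = (1 - q) * exp (- a1 * lg x) * qpow L (- lam + h1 + h2 + 1) * (qpow L (- lam - a1 - of_nat N) - 1) * t1 * t2"
  proof -
    have "q * qa2 * L1 * L2 - qa1 / a * H1 * H2 = qpow L (- lam + h1 + h2 + 1) * (qpow L (- lam - a1 - of_nat N) - 1) * t1 * t2"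
      unfolding qa1_def qa2_def a_def H1_def H2_def L1_def L2_def
      apply (simp only: qpow_add qpow_diff qpow_minus q1h qqh[OF L] qpow_nat[OF L] qpow_2 qpow_two qa2e)
      apply (simp add: field_simps qpow_nz t power2_eq_square)
      done
    then show ?thesis unfolding xa_def by simp
  qed
  have "gen_at 6 q L t1 t2 h1 h2 l1 l2 a1 lam x" using genx by blast
  then have xnz: "x \<noteq> 0" unfolding gen_at_def by (rule conjunct1)
  have xam: "exp (- a1 * lg (x / q)) = qa1 * xa"
  proof -
    have "lg x = L + lg (x / q)" using lg_q[rule_format, of "x / q"] xnz q0 by simp
    then have "- a1 * lg x = - (a1 * L) + - a1 * lg (x / q)" by (simp add: algebra_simps)
    then have "xa = exp (- (a1 * L)) * exp (- a1 * lg (x / q))" unfolding xa_def by (simp add: exp_add[symmetric])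
    moreover have "qa1 = exp (a1 * L)" unfolding qa1_def qpow_def ..
    ultimately show ?thesis by (simp add: exp_minus_inverse mult.assoc[symmetric])
  qed
  have xap: "exp (- a1 * lg (q * x)) = xa / qa1"
  proof -
    have "lg (q * x) = L + lg x" using lg_q xnz by simp
    then have "- a1 * lg (q * x) = - (a1 * L) + - a1 * lg x" by (simp add: algebra_simps)
    then have "exp (- a1 * lg (q * x)) = exp (- (a1 * L)) * xa" unfolding xa_def by (simp add: exp_add[symmetric])
    moreover have "qa1 = exp (a1 * L)" unfolding qa1_def qpow_def ..
    moreover have "xa \<noteq> 0" unfolding xa_def by simp
    ultimately show ?thesis by (simp add: exp_minus field_simps)
  qed
  have p6: "qpow L (lam - h1 + l1 + a1) = a * (q * L1) / H1"
    "qpow L (lam - h2 + l1 + a1) * t1 / t2 = a * (q * L1) / H2"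
    "qpow L (l1 + 1/2) * t1 = q * L1"
    "qpow L (l1 - l2 + 1) * t1 / t2 = q * L1 / L2"
    "qpow L (lam + l1 + a1 + 1/2) * t1 = a * (q * L1)"
    unfolding a_def H1_def H2_def L1_def L2_def using t
    apply (simp_all only: qpow_add qpow_diff qpow_minus q1h qqh[OF L])
    apply (simp_all add: field_simps qpow_nz)
    done
  have g6: "g 6 y = gshape q (exp (- a1 * lg y)) (a * (q * L1) / H1) (a * (q * L1) / H2) (q * L1 / y) (q * L1 / L2) (a * (q * L1) / y) (q * L1) C N" for y
    unfolding g_def gfun_def gpar_def C_def by (simp add: p6)
  have n6: "nondeg q (a * (q * L1) / H1) \<and> nondeg q (a * (q * L1) / H2) \<and> nondeg q (q * L1 / y) \<and> nondeg q (q * L1 / L2) \<and> nondeg q (a * (q * L1) / y)"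
    if "gen_at 6 q L t1 t2 h1 h2 l1 l2 a1 lam y" for y
    using that unfolding gen_at_def gpar_def by (simp add: p6)
  have Kf': "(1 - q) * xa * qpow L (- lam + h1 + h2 + 1) * (qpow L (- lam - a1 - of_nat N) - 1) * t1 * t2
      = (1 - q) * xa * (q * qa2 * L1 * L2 - qa1 / a * H1 * H2)"
    using Kf[symmetric] unfolding xa_def .
  have cv: "y / (x / q) = q * (y / x)" "y / (q * x) = y / x / q" for y
    using q0 xnz by (auto simp: field_simps)
  have v6: "Aop q L t1 t2 h1 h2 l1 l2 a1 a2 b (g 6) x = E0 * g 6 x - (1 - q) * exp (- a1 * lg x) * qpow L (- lam + h1 + h2 + 1)
       * (qpow L (- lam - a1 - of_nat N) - 1) * t1 * t2"
  proof -
    have ga: "gen_at 6 q L t1 t2 h1 h2 l1 l2 a1 lam (x / q)" "gen_at 6 q L t1 t2 h1 h2 l1 l2 a1 lam x"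
      "gen_at 6 q L t1 t2 h1 h2 l1 l2 a1 lam (q * x)" using genx by blast+
    note na = n6[OF ga(1), unfolded cv] and nb = n6[OF ga(2)] and nc = n6[OF ga(3), unfolded cv]
    note T = typeI[OF qn q0 nz(1-7) xnz rel Dx C0 refl, where xa=xa]
    show ?thesis
      unfolding Aop_conv g6 xam xap cv xa_def[symmetric] unfolding Kf'
      by (rule T) (use na nb nc in blast)+
  qed
  have ne: "((7::nat) = 6) = False" "((8::nat) = 6) = False" "((8::nat) = 7) = False" "((7::nat) = 7) = True" by simp_all
  have p7: "qpow L (lam - h2 + l2 + a1) = a * (q * L2) / H2"
    "qpow L (lam - h1 + l2 + a1) * t2 / t1 = a * (q * L2) / H1"
    "qpow L (l2 + 1/2) * t2 = q * L2"
    "qpow L (- l1 + l2 + 1) * t2 / t1 = q * L2 / L1"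
    "qpow L (lam + l2 + a1 + 1/2) * t2 = a * (q * L2)"
    unfolding a_def H1_def H2_def L1_def L2_def using t
    apply (simp_all only: qpow_add qpow_diff qpow_minus q1h qqh[OF L])
    apply (simp_all add: field_simps qpow_nz)
    done
  have g7: "g 7 y = gshape q (exp (- a1 * lg y)) (a * (q * L2) / H2) (a * (q * L2) / H1) (q * L2 / y) (q * L2 / L1) (a * (q * L2) / y) (q * L2) C N" for y
    unfolding g_def gfun_def gpar_def C_def[symmetric] by (simp only: ne if_True if_False prod.case p7)
  have n7: "nondeg q (a * (q * L2) / H2) \<and> nondeg q (a * (q * L2) / H1) \<and> nondeg q (q * L2 / y) \<and> nondeg q (q * L2 / L1) \<and> nondeg q (a * (q * L2) / y)"
    if "gen_at 7 q L t1 t2 h1 h2 l1 l2 a1 lam y" for y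
    using that unfolding gen_at_def gpar_def by (simp only: ne if_True if_False prod.case p7; blast)
  have rel7: "qa2 = H2 * H1 * qa1 / (q * qN * a^2 * L2 * L1)" using rel by (simp add: ac_simps)
  have Dx7: "Dexp q qN a qa1 qa2 H2 H1 L2 L1 E0 t (pol C N (t / q)) (pol C N t) (pol C N (q * t)) = 0" for t
    by (subst Dexp_swap) (rule Dx)
  have v7: "Aop q L t1 t2 h1 h2 l1 l2 a1 a2 b (g 7) x = E0 * g 7 x - (1 - q) * exp (- a1 * lg x) * qpow L (- lam + h1 + h2 + 1)
       * (qpow L (- lam - a1 - of_nat N) - 1) * t1 * t2"
  proof -
    have ga: "gen_at 7 q L t1 t2 h1 h2 l1 l2 a1 lam (x / q)" "gen_at 7 q L t1 t2 h1 h2 l1 l2 a1 lam x"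
      "gen_at 7 q L t1 t2 h1 h2 l1 l2 a1 lam (q * x)" using genx by blast+
    note na = n7[OF ga(1), unfolded cv] and nb = n7[OF ga(2)] and nc = n7[OF ga(3), unfolded cv]
    have sw: "(x - H2) * (x - H1) = (x - H1) * (x - H2)" "(x - L2) * (x - L1) = (x - L1) * (x - L2)"
      "qa1 / a * H2 * H1 = qa1 / a * H1 * H2" "q * qa2 * L2 * L1 = q * qa2 * L1 * L2" by (simp_all add: ac_simps)
    note T = typeI[OF qn q0 nz(1,2,3,5,4,7,6) xnz rel7 Dx7 C0 refl, where xa=xa, unfolded sw]
    show ?thesis
      unfolding Aop_conv g7 xam xap cv xa_def[symmetric] unfolding Kf'
      by (rule T) (use na nb nc in blast)+
  qed
  have p8: "qpow L (- lam - a1 + 1) = q / a"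
    "qpow L (- h1 + 1/2) * y / t1 = q * y / H1"
    "qpow L (- h2 + 1/2) * y / t2 = q * y / H2"
    "qpow L (- lam - l1 - a1 + 3/2) * y / t1 = q * y / (a * L1)"
    "qpow L (- lam - l2 - a1 + 3/2) * y / t2 = q * y / (a * L2)" for y
    unfolding a_def H1_def H2_def L1_def L2_def using t
    apply (simp_all only: qpow_add qpow_diff qpow_minus q1h q3h qqh[OF L])
    apply (simp_all add: field_simps qpow_nz)
    done
  have g8: "g 8 y = gshape q (exp (- a1 * lg y)) (q / a) (q * y / H1) (q * y / H2) (q * y / (a * L1)) (q * y / (a * L2)) (q / a * y) C N" for y
    unfolding g_def gfun_def gpar_def C_def[symmetric] by (simp only: ne if_True if_False prod.case p8)
  have n8: "nondeg q (q / a) \<and> nondeg q (q * y / H1) \<and> nondeg q (q * y / H2) \<and> nondeg q (q * y / (a * L1)) \<and> nondeg q (q * y / (a * L2))"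
    if "gen_at 8 q L t1 t2 h1 h2 l1 l2 a1 lam y" for y
    using that unfolding gen_at_def gpar_def by (simp only: ne if_True if_False prod.case p8; blast)
  have v8: "Aop q L t1 t2 h1 h2 l1 l2 a1 a2 b (g 8) x = E0 * g 8 x - (1 - q) * exp (- a1 * lg x) * qpow L (- lam + h1 + h2 + 1)
       * (qpow L (- lam - a1 - of_nat N) - 1) * t1 * t2"
  proof -
    define S where "S = q * x / a"
    have ga: "gen_at 8 q L t1 t2 h1 h2 l1 l2 a1 lam (x / q)" "gen_at 8 q L t1 t2 h1 h2 l1 l2 a1 lam x"
      "gen_at 8 q L t1 t2 h1 h2 l1 l2 a1 lam (q * x)" using genx by blast+
    note na = n8[OF ga(1)] and nb = n8[OF ga(2)] and nc = n8[OF ga(3)]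
    have fz: "q \<noteq> 0" "a \<noteq> 0" "H1 \<noteq> 0" "H2 \<noteq> 0" "L1 \<noteq> 0" "L2 \<noteq> 0" "x \<noteq> 0" using q0 nz xnz by auto
    have e0: "q / a = S / x" "q * x / H1 = a * S / H1" "q * x / H2 = a * S / H2" "q * x / (a * L1) = S / L1"
      "q * x / (a * L2) = S / L2" "q / a * x = S"
      unfolding S_def using fz by (auto simp: field_simps)
    have em: "q * (x / q) / H1 = a * S / H1 / q" "q * (x / q) / H2 = a * S / H2 / q" "q * (x / q) / (a * L1) = S / L1 / q"
      "q * (x / q) / (a * L2) = S / L2 / q" "q / a * (x / q) = S / q"
      unfolding S_def using fz by (auto simp: field_simps)
    have ep: "q * (q * x) / H1 = q * (a * S / H1)" "q * (q * x) / H2 = q * (a * S / H2)" "q * (q * x) / (a * L1) = q * (S / L1)"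
      "q * (q * x) / (a * L2) = q * (S / L2)" "q / a * (q * x) = q * S"
      unfolding S_def using fz by (auto simp: field_simps)
    have nd: "nondeg q (S / x)" "nondeg q (a * S / H1)" "nondeg q (a * S / H2)" "nondeg q (S / L1)" "nondeg q (S / L2)"
      "nondeg q (a * S / H1 / q)" "nondeg q (a * S / H2 / q)" "nondeg q (S / L1 / q)" "nondeg q (S / L2 / q)"
      "nondeg q (q * (a * S / H1))" "nondeg q (q * (a * S / H2))" "nondeg q (q * (S / L1))" "nondeg q (q * (S / L2))"
      using na nb nc e0 em ep by (auto elim: nondeg_cong)
    note T = typeII[OF qn q0 nz(1-7) xnz rel Dx C0 S_def nd, where xa=xa]
    have gm: "g 8 (x / q) = gshape q (qa1 * xa) (S / x) (a * S / H1 / q) (a * S / H2 / q) (S / L1 / q) (S / L2 / q) (S / q) C N"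
      unfolding g8 xam by (rule gshape_cong) (use e0 em in auto)
    have g0: "g 8 x = gshape q xa (S / x) (a * S / H1) (a * S / H2) (S / L1) (S / L2) S C N"
      unfolding g8 xa_def[symmetric] by (rule gshape_cong) (use e0 in auto)
    have gp: "g 8 (q * x) = gshape q (xa / qa1) (S / x) (q * (a * S / H1)) (q * (a * S / H2)) (q * (S / L1)) (q * (S / L2)) (q * S) C N"
      unfolding g8 xap by (rule gshape_cong) (use e0 ep in auto)
    show ?thesis
      unfolding Aop_conv gm g0 gp xa_def[symmetric] unfolding Kf'
      by (rule T)
  qed
  define K where "K = (1 - q) * exp (- a1 * lg x) * qpow L (- lam + h1 + h2 + 1) * (qpow L (- lam - a1 - of_nat N) - 1) * t1 * t2"
  have vall: "Aop q L t1 t2 h1 h2 l1 l2 a1 a2 b (g i) x = E0 * g i x - K" if "i \<in> {6, 7, 8}" for i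
    using that v6 v7 v8 unfolding K_def by auto
  have lin: "Aop q L t1 t2 h1 h2 l1 l2 a1 a2 b (\<lambda>y. g i y - g j y) x
      = Aop q L t1 t2 h1 h2 l1 l2 a1 a2 b (g i) x - Aop q L t1 t2 h1 h2 l1 l2 a1 a2 b (g j) x" for i j
    unfolding Aop_def by (simp add: algebra_simps)
  show ?thesis
  proof (intro conjI ballI)
    fix i j :: nat assume ij: "i \<in> {6, 7, 8}" "j \<in> {6, 7, 8}"
    show "Aop q L t1 t2 h1 h2 l1 l2 a1 a2 b (\<lambda>y. g i y - g j y) x = E0 * (g i x - g j x)"
      unfolding lin vall[OF ij(1)] vall[OF ij(2)] by (simp add: algebra_simps)
  next
    fix i :: nat assume i: "i \<in> {6, 7, 8}"
    show "Aop q L t1 t2 h1 h2 l1 l2 a1 a2 b (g i) x = E0 * g i x - (1 - q) * exp (- a1 * lg x) * qpow L (- lam + h1 + h2 + 1)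
                  * (qpow L (- lam - a1 - of_nat N) - 1) * t1 * t2"
      using vall[OF i] unfolding K_def .
  qed
qed

end
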